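(* Let $q$ be a prime power and let $A$ and $B$ be parity check matrices over $\mathbb{F}_q$ of the Hamming codes $[n_a,k_a,3]_q$ and $[n_b,k_b,3]_q$, where $n_a=(q^{m_a}-1)/(q-1)\ge3$, $n_b=(q^{m_b}-1)/(q-1)\ge3$, $k_a=n_a-m_a$, $k_b=n_b-m_b$. Then $H=A\otimes B$ is a parity check matrix of a $q$-ary completely regular $[n,k,d]_q$-code $C$ with $$n=n_an_b,\quad k=n-m_am_b,\quad d=3,\quad \rho=\min\{m_a,m_b\},$$ whose intersection numbers are, for $\ell=0,1,\dots,\rho$, $$b_\ell=(q-1)\Big(n_a-\frac{q^\ell-1}{q-1}\Big)\Big(n_b-\frac{q^\ell-1}{q-1}\Big),\qquad c_\ell=\frac{q^\ell-1}{q-1}\,q^{\ell-1},\qquad a_\ell=(q-1)n_an_b-c_\ell-b_\ell .$$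
   Context: $A\otimes B$ is the Kronecker product (each entry $a_{r,s}$ of $A$ replaced by the block $a_{r,s}B$). The $q$-ary Hamming code with $m$ check symbols has a parity check matrix of size $m\times(q^m-1)/(q-1)$ whose columns are one nonzero representative of each one-dimensional subspace of $\mathbb{F}_q^m$. $\rho$ is the covering radius. For a code $C$ of length $n$ and $C(l)=\{{\bf x}\in\mathbb{F}_q^n: d({\bf x},C)=l\}$, $C$ is completely regular if for every $l\ge0$ each ${\bf x}\in C(l)$ has the same number $c_l$ of neighbors (vectors at Hamming distance 1) in $C(l-1)$ and the same number $b_l$ of neighbors in $C(l+1)$; then $a_l=(q-1)n-b_l-c_l$, and $c_0=b_\rho=0$. *)

theory Defs
  imports Main
begin

text \<open>Vectors of length n over a field are functions nat => 'a vanishing outside {..<n};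
  matrices are functions nat => nat => 'a, only entries with row < m, column < n being relevant.\<close>

definition vecs :: "nat \<Rightarrow> (nat \<Rightarrow> 'a::zero) set" where
  "vecs n = {x. \<forall>i\<ge>n. x i = 0}"

definition hamming_pcm :: "(nat \<Rightarrow> nat \<Rightarrow> 'a::field) \<Rightarrow> nat \<Rightarrow> nat \<Rightarrow> bool" where
  "hamming_pcm A m n \<longleftrightarrow>
     (\<forall>j<n. \<exists>i<m. A i j \<noteq> 0) \<and>
     (\<forall>v\<in>vecs m. (\<exists>i<m. v i \<noteq> 0) \<longrightarrow>
        (\<exists>!j. j < n \<and> (\<exists>c. c \<noteq> 0 \<and> (\<forall>i<m. A i j = c * v i))))"

definition kron :: "(nat \<Rightarrow> nat \<Rightarrow> 'a::times) \<Rightarrow> (nat \<Rightarrow> nat \<Rightarrow> 'a) \<Rightarrow> nat \<Rightarrow> nat \<Rightarrow> (nat \<Rightarrow> nat \<Rightarrow> 'a)" where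
  "kron A B mb nb = (\<lambda>r s. A (r div mb) (s div nb) * B (r mod mb) (s mod nb))"

definition kernel_code :: "(nat \<Rightarrow> nat \<Rightarrow> 'a::comm_ring) \<Rightarrow> nat \<Rightarrow> nat \<Rightarrow> (nat \<Rightarrow> 'a) set" where
  "kernel_code H m n = {x \<in> vecs n. \<forall>r<m. (\<Sum>s<n. H r s * x s) = 0}"

definition hdist :: "nat \<Rightarrow> (nat \<Rightarrow> 'a) \<Rightarrow> (nat \<Rightarrow> 'a) \<Rightarrow> nat" where
  "hdist n x y = card {i. i < n \<and> x i \<noteq> y i}"

definition dist_code :: "nat \<Rightarrow> (nat \<Rightarrow> 'a) set \<Rightarrow> (nat \<Rightarrow> 'a) \<Rightarrow> nat" where
  "dist_code n C x = Min (hdist n x ` C)"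

definition min_dist :: "nat \<Rightarrow> (nat \<Rightarrow> 'a) set \<Rightarrow> nat" where
  "min_dist n C = Min {hdist n x y | x y. x \<in> C \<and> y \<in> C \<and> x \<noteq> y}"

definition covering_radius :: "nat \<Rightarrow> (nat \<Rightarrow> 'a::zero) set \<Rightarrow> nat" where
  "covering_radius n C = Max (dist_code n C ` vecs n)"

text \<open>C(l) = vectors at distance l from C; indexed by int so that C(-1) is empty.\<close>
definition layer :: "nat \<Rightarrow> (nat \<Rightarrow> 'a::zero) set \<Rightarrow> int \<Rightarrow> (nat \<Rightarrow> 'a) set" where
  "layer n C l = {x \<in> vecs n. int (dist_code n C x) = l}"

definition neighbours :: "nat \<Rightarrow> (nat \<Rightarrow> 'a::zero) \<Rightarrow> (nat \<Rightarrow> 'a) set" where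
  "neighbours n x = {y \<in> vecs n. hdist n x y = 1}"

definition completely_regular :: "nat \<Rightarrow> (nat \<Rightarrow> 'a::zero) set \<Rightarrow> (nat \<Rightarrow> nat) \<Rightarrow> (nat \<Rightarrow> nat) \<Rightarrow> bool" where
  "completely_regular n C b c \<longleftrightarrow>
     (\<forall>l::nat. \<forall>x \<in> layer n C (int l).
        card (neighbours n x \<inter> layer n C (int l + 1)) = b l \<and>
        card (neighbours n x \<inter> layer n C (int l - 1)) = c l)"

end

theory Submission imports Defs "HOL-Library.Function_Algebras" "HOL-Library.FuncSet" begin


lemma card_fibres:
  assumes "finite X" "\<And>y. y \<in> f ` X \<Longrightarrow> card {x\<in>X. f x = y} = c"
  shows "card X = card (f ` X) * c"
proof -
  have X: "X = (\<Union>y\<in>f ` X. {x\<in>X. f x = y})" by auto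
  have "card X = (\<Sum>y\<in>f ` X. card {x\<in>X. f x = y})"
    by (subst X, rule card_UN_disjoint) (use assms in auto)
  also have "\<dots> = (\<Sum>y\<in>f ` X. c)" using assms(2) by simp
  finally show ?thesis by simp
qed

definition sc :: "'a::field \<Rightarrow> (nat \<Rightarrow> 'a) \<Rightarrow> nat \<Rightarrow> 'a" where "sc c x = (\<lambda>i. c * x i)"

lemma vecs_add[intro]: "(x::nat\<Rightarrow>'a::ab_group_add) \<in> vecs n \<Longrightarrow> y \<in> vecs n \<Longrightarrow> x + y \<in> vecs n"
  by (simp add: vecs_def)
lemma vecs_diff[intro]: "(x::nat\<Rightarrow>'a::ab_group_add) \<in> vecs n \<Longrightarrow> y \<in> vecs n \<Longrightarrow> x - y \<in> vecs n"
  by (simp add: vecs_def)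
lemma vecs_uminus[intro]: "(x::nat\<Rightarrow>'a::ab_group_add) \<in> vecs n \<Longrightarrow> - x \<in> vecs n"
  by (simp add: vecs_def)
lemma vecs_zero[intro,simp]: "(0::nat\<Rightarrow>'a::zero) \<in> vecs n"
  by (simp add: vecs_def)
lemma vecs_sc[intro]: "x \<in> vecs n \<Longrightarrow> sc c x \<in> vecs n"
  by (simp add: vecs_def sc_def)

lemma card_vecs:
  shows "card (vecs k :: (nat \<Rightarrow> 'a::{finite,zero}) set) = card (UNIV::'a set) ^ k"
    and "finite (vecs k :: (nat \<Rightarrow> 'a::{finite,zero}) set)"
proof -
  have b: "bij_betw (\<lambda>x. restrict x {..<k}) (vecs k :: (nat \<Rightarrow> 'a) set) (PiE {..<k} (\<lambda>_. UNIV))"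
  proof (rule bij_betwI[where g = "\<lambda>p i. if i < k then p i else 0"])
    show "(\<lambda>x. restrict x {..<k}) \<in> vecs k \<rightarrow> PiE {..<k} (\<lambda>_. UNIV)" by auto
    show "(\<lambda>p i. if i < k then p i else 0) \<in> PiE {..<k} (\<lambda>_. UNIV) \<rightarrow> (vecs k :: (nat \<Rightarrow> 'a) set)"
      by (auto simp: vecs_def)
    show "\<And>x. x \<in> (vecs k :: (nat \<Rightarrow> 'a) set) \<Longrightarrow> (\<lambda>i. if i < k then restrict x {..<k} i else 0) = x"
      by (auto simp: vecs_def)
    show "\<And>y. y \<in> PiE {..<k} (\<lambda>_. UNIV) \<Longrightarrow> restrict (\<lambda>i. if i < k then (y::nat\<Rightarrow>'a) i else 0) {..<k} = y"
      by (auto simp: PiE_def extensional_def restrict_def)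
  qed
  have "card (PiE {..<k} (\<lambda>_. (UNIV::'a set))) = card (UNIV::'a set) ^ k" by (simp add: card_PiE)
  then show "card (vecs k :: (nat \<Rightarrow> 'a) set) = card (UNIV::'a set) ^ k" using bij_betw_same_card[OF b] by simp
  have "finite (PiE {..<k} (\<lambda>_. (UNIV::'a set)))" by (simp add: finite_PiE)
  then show "finite (vecs k :: (nat \<Rightarrow> 'a) set)" using bij_betw_finite[OF b] by simp
qed




definition subsp :: "(nat \<Rightarrow> 'a::field) set \<Rightarrow> bool" where
  "subsp U \<longleftrightarrow> 0 \<in> U \<and> (\<forall>x\<in>U. \<forall>y\<in>U. x + y \<in> U) \<and> (\<forall>c. \<forall>x\<in>U. sc c x \<in> U)"

lemma sc_simps[simp]: "sc 1 x = x" "sc 0 x = 0" "sc c 0 = 0" "sc (-1) x = - x"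
  "sc c (x + y) = sc c x + sc c y" "sc c (sc d x) = sc (c*d) x" "sc c x i = c * x i"
  by (auto simp: sc_def fun_eq_iff algebra_simps)

lemma subspD:
  assumes "subsp U"
  shows "0 \<in> U" "x \<in> U \<Longrightarrow> y \<in> U \<Longrightarrow> x + y \<in> U" "x \<in> U \<Longrightarrow> sc c x \<in> U"
    "x \<in> U \<Longrightarrow> - x \<in> U" "x \<in> U \<Longrightarrow> y \<in> U \<Longrightarrow> x - y \<in> U"
proof -
  show "0 \<in> U" using assms by (simp add: subsp_def)
  show "x \<in> U \<Longrightarrow> y \<in> U \<Longrightarrow> x + y \<in> U" using assms by (simp add: subsp_def)
  show s: "x \<in> U \<Longrightarrow> sc c x \<in> U" for c x using assms by (simp add: subsp_def)
  show m: "x \<in> U \<Longrightarrow> - x \<in> U" for x using s[of x "-1"] by simp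
  show "x \<in> U \<Longrightarrow> y \<in> U \<Longrightarrow> x - y \<in> U" using m[of y] assms
    by (simp add: subsp_def) (metis diff_conv_add_uminus)
qed

lemma subsp_vecs: "subsp (vecs k)"
  by (auto simp: subsp_def)

lemma card_hom_fibre:
  fixes L :: "(nat \<Rightarrow> 'a::field) \<Rightarrow> 'b::ab_group_add"
  assumes U: "subsp U" and add: "\<And>x y. x \<in> U \<Longrightarrow> y \<in> U \<Longrightarrow> L (x + y) = L x + L y"
    and x0: "x0 \<in> U"
  shows "card {x\<in>U. L x = L x0} = card {x\<in>U. L x = 0}"
proof -
  have "{x\<in>U. L x = L x0} = (\<lambda>k. x0 + k) ` {x\<in>U. L x = 0}"
  proof (rule set_eqI, rule iffI)
    fix x assume x: "x \<in> {x\<in>U. L x = L x0}"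
    have d: "x - x0 \<in> U" using subspD(5)[OF U] x x0 by auto
    have "L x = L (x0 + (x - x0))" by simp
    also have "\<dots> = L x0 + L (x - x0)" using add[OF x0 d] .
    finally have "L (x - x0) = 0" using x by simp
    then show "x \<in> (\<lambda>k. x0 + k) ` {x\<in>U. L x = 0}"
      by (intro image_eqI[where x="x - x0"]) (use d in auto)
  next
    fix x assume "x \<in> (\<lambda>k. x0 + k) ` {x\<in>U. L x = 0}"
    then obtain k where k: "k \<in> U" "L k = 0" "x = x0 + k" by auto
    then show "x \<in> {x\<in>U. L x = L x0}" using add[OF x0 k(1)] subspD(2)[OF U x0 k(1)] by auto
  qed
  moreover have "inj (\<lambda>k. x0 + k)" by (simp add: inj_def)
  ultimately show ?thesis by (simp add: card_image inj_on_def)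
qed

lemma card_hom:
  fixes L :: "(nat \<Rightarrow> 'a::field) \<Rightarrow> 'b::ab_group_add"
  assumes U: "subsp U" "finite U" and add: "\<And>x y. x \<in> U \<Longrightarrow> y \<in> U \<Longrightarrow> L (x + y) = L x + L y"
  shows "card U = card (L ` U) * card {x\<in>U. L x = 0}"
proof (rule card_fibres[OF U(2)])
  fix y assume "y \<in> L ` U"
  then obtain x0 where "x0 \<in> U" "y = L x0" by auto
  then show "card {x\<in>U. L x = y} = card {x\<in>U. L x = 0}" using card_hom_fibre[OF U(1) add] by blast
qed

lemma q_ge2: "2 \<le> card (UNIV :: 'a::{finite,field} set)"
proof -
  have "{0,1} \<subseteq> (UNIV :: 'a set)" by simp
  then have "card {0::'a,1} \<le> card (UNIV :: 'a set)" by (rule card_mono[OF finite])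
  then show ?thesis by simp
qed

text \<open>Linear functionals on a subspace: image is 0 or everything.\<close>
lemma card_functional:
  fixes \<phi> :: "(nat \<Rightarrow> 'a::{finite,field}) \<Rightarrow> 'a"
  assumes U: "subsp U" "finite U"
    and add: "\<And>x y. x \<in> U \<Longrightarrow> y \<in> U \<Longrightarrow> \<phi> (x + y) = \<phi> x + \<phi> y"
    and hom: "\<And>c x. x \<in> U \<Longrightarrow> \<phi> (sc c x) = c * \<phi> x"
    and nz: "x1 \<in> U" "\<phi> x1 \<noteq> 0"
  shows "card U = card (UNIV::'a set) * card {x\<in>U. \<phi> x = 0}"
proof -
  have "\<phi> ` U = UNIV"
  proof (rule set_eqI, rule iffI)
    fix a :: 'a
    have 1: "sc (a / \<phi> x1) x1 \<in> U" using subspD(3)[OF U(1) nz(1)] .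
    have 2: "\<phi> (sc (a / \<phi> x1) x1) = a" using hom[OF nz(1)] nz(2) by simp
    from 1 2 show "a \<in> \<phi> ` U" by (metis image_eqI)
  qed simp
  have "card U = card (\<phi> ` U) * card {x\<in>U. \<phi> x = 0}" by (rule card_hom[OF U add])
  then show ?thesis unfolding \<open>\<phi> ` U = UNIV\<close> .
qed

lemma subsp_power:
  assumes "subsp (U :: (nat \<Rightarrow> 'a::{finite,field}) set)" "U \<subseteq> vecs k"
  shows "\<exists>d\<le>k. card U = card (UNIV :: 'a set) ^ d"
  using assms
proof (induction k arbitrary: U)
  case 0
  have v0: "vecs 0 = {0 :: nat \<Rightarrow> 'a}" by (auto simp: vecs_def fun_eq_iff)
  have "U \<subseteq> {0}" using 0(2) unfolding v0 .
  then have "U = {0}" using subspD(1)[OF 0(1)] by blast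
  then show ?case by simp
next
  case (Suc k)
  let ?q = "card (UNIV :: 'a set)"
  have finU: "finite U" using Suc(3) card_vecs(2) by (rule finite_subset)
  define U0 where "U0 = {x\<in>U. x k = 0}"
  have U0: "subsp U0" unfolding subsp_def
  proof (intro conjI ballI allI)
    show "0 \<in> U0" using subspD(1)[OF Suc(2)] unfolding U0_def by simp
    show "x + y \<in> U0" if "x \<in> U0" "y \<in> U0" for x y
      using that subspD(2)[OF Suc(2)] unfolding U0_def by simp
    show "sc c x \<in> U0" if "x \<in> U0" for c x
      using that subspD(3)[OF Suc(2)] unfolding U0_def by simp
  qed
  have "U0 \<subseteq> vecs k"
  proof
    fix x assume x: "x \<in> U0"
    then have "x \<in> vecs (Suc k)" "x k = 0" using Suc(3) unfolding U0_def by auto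
    then show "x \<in> vecs k" unfolding vecs_def
    proof (intro CollectI allI impI)
      fix i assume "x \<in> {x. \<forall>i\<ge>Suc k. x i = 0}" "x k = 0" "k \<le> i"
      then show "x i = 0" by (cases "i = k") auto
    qed
  qed
  from Suc.IH[OF U0 this] obtain d where d: "d \<le> k" "card U0 = ?q ^ d" by blast
  show ?case
  proof (cases "\<exists>x\<in>U. x k \<noteq> 0")
    case True
    then obtain x1 where x1: "x1 \<in> U" "x1 k \<noteq> 0" by blast
    have "card U = ?q * card {x\<in>U. (\<lambda>x. x k) x = 0}"
      by (rule card_functional[OF Suc(2) finU _ _ x1(1), of "\<lambda>x. x k"]) (simp_all add: x1(2))
    then have "card U = ?q ^ Suc d" using d(2) unfolding U0_def by simp
    moreover have "Suc d \<le> Suc k" using d(1) by simp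
    ultimately show ?thesis by blast
  next
    case False
    then have "U0 = U" unfolding U0_def by blast
    then have "card U = ?q ^ d" using d(2) by simp
    moreover have "d \<le> Suc k" using d(1) by simp
    ultimately show ?thesis by blast
  qed
qed

definition dimq :: "(nat \<Rightarrow> 'a::{finite,field}) set \<Rightarrow> nat" where
  "dimq U = (THE d. card U = card (UNIV :: 'a set) ^ d)"

lemma pow_inj: "(card (UNIV :: 'a::{finite,field} set)) ^ a = card (UNIV :: 'a set) ^ b \<longleftrightarrow> a = b"
  using q_ge2[where 'a='a] by (simp add: power_inject_exp)

lemma dimq_eq: "card (U :: (nat \<Rightarrow> 'a::{finite,field}) set) = card (UNIV :: 'a::{finite,field} set) ^ d \<Longrightarrow> dimq U = d"
  unfolding dimq_def by (rule the_equality) (use pow_inj[where 'a='a] in auto)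

lemma dimq:
  assumes "subsp (U :: (nat \<Rightarrow> 'a::{finite,field}) set)" "U \<subseteq> vecs k"
  shows "card U = card (UNIV :: 'a::{finite,field} set) ^ dimq U" "dimq U \<le> k"
proof -
  obtain d where d: "d \<le> k" "card U = card (UNIV :: 'a set) ^ d" using subsp_power[OF assms] by blast
  then have "dimq U = d" by (intro dimq_eq)
  then show "card U = card (UNIV :: 'a::{finite,field} set) ^ dimq U" "dimq U \<le> k" using d by auto
qed




definition mv :: "(nat \<Rightarrow> nat \<Rightarrow> 'a::field) \<Rightarrow> nat \<Rightarrow> (nat \<Rightarrow> 'a) \<Rightarrow> nat \<Rightarrow> 'a" where
  "mv S k x = (\<lambda>i. \<Sum>j<k. S i j * x j)"
definition matM :: "nat \<Rightarrow> nat \<Rightarrow> (nat \<Rightarrow> nat \<Rightarrow> 'a::zero) set" where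
  "matM m k = {S. \<forall>i j. m \<le> i \<or> k \<le> j \<longrightarrow> S i j = 0}"
definition img :: "(nat \<Rightarrow> nat \<Rightarrow> 'a::field) \<Rightarrow> nat \<Rightarrow> (nat \<Rightarrow> 'a) set" where
  "img S k = mv S k ` vecs k"
definition ker :: "(nat \<Rightarrow> nat \<Rightarrow> 'a::field) \<Rightarrow> nat \<Rightarrow> (nat \<Rightarrow> 'a) set" where
  "ker S k = {x\<in>vecs k. mv S k x = 0}"
definition rk :: "(nat \<Rightarrow> nat \<Rightarrow> 'a::{finite,field}) \<Rightarrow> nat \<Rightarrow> nat" where
  "rk S k = dimq (img S k)"
definition dot :: "nat \<Rightarrow> (nat \<Rightarrow> 'a::field) \<Rightarrow> (nat \<Rightarrow> 'a) \<Rightarrow> 'a" where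
  "dot k v x = (\<Sum>j<k. v j * x j)"
definition outer :: "(nat \<Rightarrow> 'a::field) \<Rightarrow> (nat \<Rightarrow> 'a) \<Rightarrow> nat \<Rightarrow> nat \<Rightarrow> 'a" where
  "outer u v = (\<lambda>i j. u i * v j)"

lemma mv_add: "mv S k (x + y) = mv S k x + mv S k y"
  by (simp add: mv_def fun_eq_iff distrib_left sum.distrib)
lemma mv_sc: "mv S k (sc c x) = sc c (mv S k x)"
  by (simp add: mv_def fun_eq_iff sum_distrib_left algebra_simps)
lemma mv_zero[simp]: "mv S k 0 = 0"
  by (simp add: mv_def fun_eq_iff)
lemma mv_diff: "mv S k (x - y) = mv S k x - mv S k y"
  by (simp add: mv_def fun_eq_iff algebra_simps sum_subtractf)
lemma mv_vecs: "S \<in> matM m k \<Longrightarrow> mv S k x \<in> vecs m"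
  by (simp add: mv_def vecs_def matM_def)
lemma dot_add: "dot k v (x + y) = dot k v x + dot k v y"
  by (simp add: dot_def distrib_left sum.distrib)
lemma dot_add1: "dot k (v + w) x = dot k v x + dot k w x"
  by (simp add: dot_def distrib_right sum.distrib)
lemma dot_sc: "dot k v (sc c x) = c * dot k v x"
  by (simp add: dot_def sum_distrib_left algebra_simps)
lemma dot_sc1: "dot k (sc c v) x = c * dot k v x"
  by (simp add: dot_def sum_distrib_left algebra_simps)
lemma dot_diff: "dot k v (x - y) = dot k v x - dot k v y"
  by (simp add: dot_def algebra_simps sum_subtractf)
lemma dot_zero[simp]: "dot k v 0 = 0" "dot k 0 x = 0"
  by (simp_all add: dot_def)
lemma mv_outer: "mv (S + outer u v) k x = mv S k x + sc (dot k v x) u"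
proof
  fix i
  have "mv (S + outer u v) k x i = (\<Sum>j<k. S i j * x j + u i * (v j * x j))"
    by (simp add: mv_def outer_def distrib_right mult.assoc)
  also have "\<dots> = mv S k x i + u i * dot k v x"
    by (simp add: sum.distrib mv_def dot_def sum_distrib_left)
  finally show "mv (S + outer u v) k x i = (mv S k x + sc (dot k v x) u) i" by (simp add: mult.commute)
qed
lemma outer_matM: "S \<in> matM m k \<Longrightarrow> u \<in> vecs m \<Longrightarrow> v \<in> vecs k \<Longrightarrow> S + outer u v \<in> matM m k"
  by (auto simp: matM_def vecs_def outer_def)

lemma img_subsp: "subsp (img S k)"
  unfolding subsp_def img_def
proof (intro conjI ballI allI)
  show "0 \<in> mv S k ` vecs k" by (rule image_eqI[where x=0]) auto
  show "x + y \<in> mv S k ` vecs k" if "x \<in> mv S k ` vecs k" "y \<in> mv S k ` vecs k" for x y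
    using that by (auto simp: mv_add[symmetric])
  show "sc c x \<in> mv S k ` vecs k" if "x \<in> mv S k ` vecs k" for c x
    using that by (auto simp: mv_sc[symmetric])
qed

lemma ker_subsp: "subsp (ker S k)"
  unfolding subsp_def ker_def by (auto simp: mv_add mv_sc)

lemma img_vecs: "S \<in> matM m k \<Longrightarrow> img S k \<subseteq> vecs m"
  by (auto simp: img_def mv_vecs)

lemma rank_nullity:
  "card (vecs k :: (nat \<Rightarrow> 'a::{finite,field}) set) = card (img (S::nat\<Rightarrow>nat\<Rightarrow>'a) k) * card (ker S k)"
  unfolding img_def ker_def
  by (rule card_hom[of "vecs k" "mv S k", OF subsp_vecs card_vecs(2)]) (simp add: mv_add)

lemma card_ker_pos: "0 < card (ker (S::nat\<Rightarrow>nat\<Rightarrow>'a::{finite,field}) k)"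
proof -
  have "finite (ker S k :: (nat \<Rightarrow> 'a) set)" using card_vecs(2)[where 'a='a and k=k]
    unfolding ker_def by (rule finite_subset[rotated]) auto
  moreover have "0 \<in> ker S k" by (simp add: ker_def)
  ultimately show ?thesis by (auto simp: card_gt_0_iff)
qed

lemma card_img: "(S::nat\<Rightarrow>nat\<Rightarrow>'a::{finite,field}) \<in> matM m k \<Longrightarrow> card (img S k) = card (UNIV :: 'a::{finite,field} set) ^ rk S k"
  unfolding rk_def using dimq(1)[OF img_subsp img_vecs] by blast

lemma rk_le_m: "S \<in> matM m k \<Longrightarrow> rk (S :: nat \<Rightarrow> nat \<Rightarrow> 'a::{finite,field}) k \<le> m"
  unfolding rk_def using dimq(2)[OF img_subsp img_vecs] by blast

lemma rk_le_k: "S \<in> matM m k \<Longrightarrow> rk (S :: nat \<Rightarrow> nat \<Rightarrow> 'a::{finite,field}) k \<le> k"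
proof -
  assume S: "S \<in> matM m k"
  have "card (img S k) \<le> card (vecs k :: (nat \<Rightarrow> 'a) set)"
    unfolding img_def by (rule card_image_le[OF card_vecs(2)])
  then have "card (UNIV::'a set) ^ rk S k \<le> card (UNIV::'a set) ^ k"
    using card_img[OF S] card_vecs(1) by metis
  then show ?thesis using q_ge2[where 'a='a] by (simp add: power_le_imp_le_exp)
qed




definition pt :: "nat \<Rightarrow> 'a::zero \<Rightarrow> nat \<Rightarrow> 'a" where "pt i c = (\<lambda>j. if j = i then c else 0)"

lemma pt_vecs: "i < k \<Longrightarrow> pt i c \<in> vecs k"
  by (simp add: pt_def vecs_def)

lemma dot_pt2: "i < k \<Longrightarrow> dot k v (pt i c) = v i * c"
proof -
  assume i: "i < k"
  have "dot k v (pt i c) = (\<Sum>j<k. if j = i then v i * c else 0)"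
    unfolding dot_def pt_def by (intro sum.cong refl) simp
  also have "\<dots> = v i * c" using i by simp
  finally show ?thesis .
qed

lemma dot_pt1: "i < k \<Longrightarrow> dot k (pt i c) x = c * x i"
proof -
  assume i: "i < k"
  have "dot k (pt i c) x = (\<Sum>j<k. if j = i then c * x i else 0)"
    unfolding dot_def pt_def by (intro sum.cong refl) simp
  also have "\<dots> = c * x i" using i by simp
  finally show ?thesis .
qed

lemma vecs_nz: "x \<in> vecs k \<Longrightarrow> x \<noteq> 0 \<Longrightarrow> \<exists>i<k. x i \<noteq> 0"
proof -
  assume x: "x \<in> vecs k" "x \<noteq> 0"
  have "\<exists>i. x i \<noteq> 0"
  proof (rule ccontr)
    assume "\<not> (\<exists>i. x i \<noteq> 0)"
    then have "x = 0" by (intro ext) simp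
    then show False using x(2) by simp
  qed
  then obtain i where "x i \<noteq> 0" by blast
  moreover have "i < k"
  proof (rule ccontr)
    assume "\<not> i < k"
    then have "k \<le> i" by simp
    then show False using x(1) \<open>x i \<noteq> 0\<close> unfolding vecs_def by simp
  qed
  ultimately show ?thesis by blast
qed

lemma card_filter_sum: "finite A \<Longrightarrow> card {x\<in>A. P x} = (\<Sum>x\<in>A. if P x then 1 else 0)"
proof -
  assume A: "finite A"
  have "card {x\<in>A. P x} = (\<Sum>x\<in>{x\<in>A. P x}. 1)" by simp
  also have "\<dots> = (\<Sum>x\<in>A. if P x then 1 else 0)" by (rule sum.inter_filter[OF A])
  finally show ?thesis .
qed

lemma dot2_card:
  fixes v :: "nat \<Rightarrow> 'a::{finite,field}"
  assumes v: "v \<in> vecs k" "v \<noteq> 0"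
  shows "card (vecs k :: (nat \<Rightarrow> 'a) set) = card (UNIV::'a set) * card {z\<in>vecs k. dot k v z = 0}"
    and "card {z\<in>vecs k. dot k v z = c} = card {z\<in>vecs k. dot k v z = 0}"
proof -
  obtain i where i: "i < k" "v i \<noteq> 0" using vecs_nz[OF v] by blast
  show "card (vecs k :: (nat \<Rightarrow> 'a) set) = card (UNIV::'a set) * card {z\<in>vecs k. dot k v z = 0}"
    by (rule card_functional[OF subsp_vecs card_vecs(2) _ _ pt_vecs[OF i(1)], of "dot k v" 1])
      (simp_all add: dot_add dot_sc dot_pt2[OF i(1)] i(2))
  have "card {z\<in>vecs k. dot k v z = dot k v (pt i (c / v i))} = card {z\<in>vecs k. dot k v z = 0}"
    by (rule card_hom_fibre[OF subsp_vecs _ pt_vecs[OF i(1)]]) (simp add: dot_add)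
  moreover have "dot k v (pt i (c / v i)) = c" using i by (simp add: dot_pt2)
  ultimately show "card {z\<in>vecs k. dot k v z = c} = card {z\<in>vecs k. dot k v z = 0}" by simp
qed

lemma dot1_card:
  fixes x :: "nat \<Rightarrow> 'a::{finite,field}"
  assumes x: "x \<in> vecs k" "x \<noteq> 0"
  shows "card (vecs k :: (nat \<Rightarrow> 'a) set) = card (UNIV::'a set) * card {v\<in>vecs k. dot k v x = 0}"
proof -
  obtain i where i: "i < k" "x i \<noteq> 0" using vecs_nz[OF x] by blast
  show ?thesis
    by (rule card_functional[OF subsp_vecs card_vecs(2) _ _ pt_vecs[OF i(1)], of "\<lambda>v. dot k v x" 1])
      (simp_all add: dot_add1 dot_sc1 dot_pt1[OF i(1)] i(2))
qed




locale mat =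
  fixes S :: "nat \<Rightarrow> nat \<Rightarrow> 'a::{finite,field}" and m k :: nat
  assumes S: "S \<in> matM m k"
begin

abbreviation "W \<equiv> img S k"
abbreviation "K \<equiv> ker S k"
definition "Kp = {v\<in>vecs k. \<forall>x\<in>K. dot k v x = 0}"

lemma finK: "finite K"
  using card_vecs(2)[where 'a='a and k=k] unfolding ker_def by (rule finite_subset[rotated]) auto

lemma finW: "finite W"
  unfolding img_def using card_vecs(2)[where 'a='a and k=k] by (rule finite_imageI)

lemma cardW: "card W = (card (UNIV::'a set)) ^ rk S k"
  by (rule card_img[OF S])

lemma RN: "(card (UNIV::'a set)) ^ k = (card (UNIV::'a set)) ^ rk S k * card K"
  using rank_nullity[of k S] card_vecs(1)[where 'a='a and k=k] cardW by simp

lemma cardK: "card K = (card (UNIV::'a set)) ^ (k - rk S k)"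
proof -
  have "(card (UNIV::'a set)) ^ rk S k * (card (UNIV::'a set)) ^ (k - rk S k) = (card (UNIV::'a set)) ^ k" using rk_le_k[OF S] by (simp add: power_add[symmetric])
  then have "(card (UNIV::'a set)) ^ rk S k * (card (UNIV::'a set)) ^ (k - rk S k) = (card (UNIV::'a set)) ^ rk S k * card K" using RN by simp
  then show ?thesis using q_ge2[where 'a='a] by simp
qed

lemma W_vecs: "W \<subseteq> vecs m" by (rule img_vecs[OF S])

lemma Kp_vecs: "Kp \<subseteq> vecs k" unfolding Kp_def by blast

lemma in_W: "x \<in> vecs k \<Longrightarrow> mv S k x \<in> W" unfolding img_def by blast

lemma ker_notin:
  assumes u: "u \<notin> W" and x: "x \<in> vecs k"
  shows "mv (S + outer u v) k x = 0 \<longleftrightarrow> mv S k x = 0 \<and> dot k v x = 0"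
proof
  assume g: "mv (S + outer u v) k x = 0"
  then have g': "mv S k x + sc (dot k v x) u = 0" by (simp add: mv_outer)
  show "mv S k x = 0 \<and> dot k v x = 0"
  proof (cases "dot k v x = 0")
    case True then show ?thesis using g' by simp
  next
    case False
    define d where "d = dot k v x"
    have "u = mv S k (sc (- 1 / d) x)"
    proof
      fix i
      have "mv S k x i + d * u i = 0" using fun_cong[OF g', of i] by (simp add: d_def)
      then have "u i = - 1 / d * mv S k x i" using False unfolding d_def[symmetric]
        by (simp add: field_simps) (simp add: algebra_simps add_eq_0_iff)
      then show "u i = mv S k (sc (- 1 / d) x) i" by (simp add: mv_sc)
    qed
    then have "u \<in> W" using in_W[OF vecs_sc[OF x]] by simp
    then show ?thesis using u by simp
  qed
next
  assume "mv S k x = 0 \<and> dot k v x = 0"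
  then show "mv (S + outer u v) k x = 0" by (simp add: mv_outer)
qed

lemma K_subsp: "subsp K" by (rule ker_subsp)

lemma rk_a:
  assumes u: "u \<in> vecs m" "u \<notin> W" and v: "v \<in> vecs k" "v \<notin> Kp"
  shows "rk (S + outer u v) k = rk S k + 1"
proof -
  have g: "S + outer u v \<in> matM m k" by (rule outer_matM[OF S u(1) v(1)])
  have kg: "ker (S + outer u v) k = {x\<in>K. dot k v x = 0}"
    unfolding ker_def using ker_notin[OF u(2)] by blast
  obtain x1 where x1: "x1 \<in> K" "dot k v x1 \<noteq> 0" using v unfolding Kp_def by blast
  have "card K = (card (UNIV::'a set)) * card {x\<in>K. dot k v x = 0}"
    by (rule card_functional[where \<phi>="dot k v", OF K_subsp finK _ _ x1]) (simp_all add: dot_add dot_sc)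
  then have cK: "card K = (card (UNIV::'a set)) * card (ker (S + outer u v) k)" using kg by simp
  have "(card (UNIV::'a set)) ^ k = (card (UNIV::'a set)) ^ rk (S + outer u v) k * card (ker (S + outer u v) k)"
    using rank_nullity[of k "S + outer u v"] card_vecs(1)[where 'a='a and k=k] card_img[OF g] by simp
  moreover have "(card (UNIV::'a set)) ^ k = (card (UNIV::'a set)) ^ (rk S k + 1) * card (ker (S + outer u v) k)"
    using RN cK by simp
  ultimately have "(card (UNIV::'a set)) ^ rk (S + outer u v) k = (card (UNIV::'a set)) ^ (rk S k + 1)"
    using card_ker_pos[of "S + outer u v" k] by simp
  then show ?thesis using pow_inj[where 'a='a] by blast
qed

lemma rk_b:
  assumes u: "u \<in> vecs m" "u \<notin> W" and v: "v \<in> vecs k" "v \<in> Kp"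
  shows "rk (S + outer u v) k = rk S k"
proof -
  have g: "S + outer u v \<in> matM m k" by (rule outer_matM[OF S u(1) v(1)])
  have "ker (S + outer u v) k = {x\<in>K. dot k v x = 0}"
    unfolding ker_def using ker_notin[OF u(2)] by blast
  also have "\<dots> = K" using v(2) unfolding Kp_def by blast
  finally have kg: "ker (S + outer u v) k = K" .
  have "(card (UNIV::'a set)) ^ k = (card (UNIV::'a set)) ^ rk (S + outer u v) k * card K"
    using rank_nullity[of k "S + outer u v"] card_vecs(1)[where 'a='a and k=k] card_img[OF g] kg by simp
  then have "(card (UNIV::'a set)) ^ rk (S + outer u v) k = (card (UNIV::'a set)) ^ rk S k"
    using RN card_ker_pos[of S k] by simp
  then show ?thesis using pow_inj[where 'a='a] by blast
qed

lemma img_W: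
  assumes z: "z \<in> vecs k" "mv S k z = u" and dz: "dot k v z \<noteq> -1"
  shows "img (S + outer u v) k = W"
proof
  show "img (S + outer u v) k \<subseteq> W"
  proof
    fix w assume "w \<in> img (S + outer u v) k"
    then obtain x where x: "x \<in> vecs k" "w = mv (S + outer u v) k x" unfolding img_def by blast
    have "w = mv S k (x + sc (dot k v x) z)" using x(2) z(2) by (simp add: mv_outer mv_add mv_sc)
    then show "w \<in> W" using in_W x(1) z(1) by blast
  qed
next
  show "W \<subseteq> img (S + outer u v) k"
  proof
    fix w assume "w \<in> W"
    then obtain y where y: "y \<in> vecs k" "w = mv S k y" unfolding img_def by blast
    define e where "e = 1 + dot k v z"
    have e: "e \<noteq> 0" using dz unfolding e_def by (simp add: add_eq_0_iff)
    define t where "t = dot k v y / e"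
    define x where "x = y - sc t z"
    have xv: "x \<in> vecs k" unfolding x_def using y(1) z(1) by blast
    have "dot k v x = dot k v y - t * dot k v z" unfolding x_def by (simp add: dot_diff dot_sc)
    also have "\<dots> = t" unfolding t_def using e unfolding e_def by (simp add: field_simps)
    finally have dx: "dot k v x = t" .
    have eq: "mv (S + outer u v) k x = mv S k (x + sc t z)" using dx z(2) by (simp add: mv_outer mv_add mv_sc)
    have xy: "x + sc t z = y" unfolding x_def by simp
    have "w = mv (S + outer u v) k x" unfolding eq xy y(2) ..
    then show "w \<in> img (S + outer u v) k" unfolding img_def using xv by blast
  qed
qed

lemma rk_d:
  assumes z: "z \<in> vecs k" "mv S k z = u" and dz: "dot k v z \<noteq> -1"
  shows "rk (S + outer u v) k = rk S k"
  unfolding rk_def using img_W[OF z dz] by simp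

lemma rk_c:
  assumes u: "u \<in> W" and v: "v \<in> vecs k" "v \<notin> Kp"
  shows "rk (S + outer u v) k = rk S k"
proof -
  obtain z where z: "z \<in> vecs k" "mv S k z = u" using u unfolding img_def by blast
  obtain x1 where x1: "x1 \<in> K" "dot k v x1 \<noteq> 0" using v unfolding Kp_def by blast
  show ?thesis
  proof (cases "dot k v z = -1")
    case False then show ?thesis using rk_d[OF z] by blast
  next
    case True
    have z': "z + x1 \<in> vecs k" "mv S k (z + x1) = u" using z x1(1) unfolding ker_def by (auto simp: mv_add)
    have "dot k v (z + x1) \<noteq> -1" using True x1(2) by (simp add: dot_add)
    then show ?thesis using rk_d[OF z'] by blast
  qed
qed

lemma rk_e:
  assumes v: "v \<in> vecs k" "v \<in> Kp" and z: "z \<in> vecs k" "mv S k z = u" and dz: "dot k v z = -1"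
  shows "rk (S + outer u v) k + 1 = rk S k"
proof -
  have u: "u \<in> vecs m" using z W_vecs in_W by blast
  have g: "S + outer u v \<in> matM m k" by (rule outer_matM[OF S u v(1)])
  define H where "H = {y\<in>vecs k. dot k v y = 0}"
  have vnz: "v \<noteq> 0" using dz by auto
  have H1: "(card (UNIV::'a set)) ^ k = (card (UNIV::'a set)) * card H" unfolding H_def using dot2_card(1)[OF v(1) vnz] card_vecs(1)[where 'a='a] by simp
  have Hs: "subsp H" unfolding H_def subsp_def by (auto simp: dot_add dot_sc)
  have Hf: "finite H" unfolding H_def using card_vecs(2)[where 'a='a and k=k] by simp
  have KH: "{x\<in>H. mv S k x = 0} = K" using v(2) unfolding H_def Kp_def ker_def by blast
  have H2: "card H = card (mv S k ` H) * card K"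
    using card_hom[OF Hs Hf, of "mv S k"] KH by (simp add: mv_add)
  have imgH: "img (S + outer u v) k = mv S k ` H"
  proof
    show "img (S + outer u v) k \<subseteq> mv S k ` H"
    proof
      fix w assume "w \<in> img (S + outer u v) k"
      then obtain x where x: "x \<in> vecs k" "w = mv (S + outer u v) k x" unfolding img_def by blast
      have "w = mv S k (x + sc (dot k v x) z)" using x(2) z(2) by (simp add: mv_outer mv_add mv_sc)
      moreover have "x + sc (dot k v x) z \<in> H" unfolding H_def using x(1) z(1) dz
        by (simp add: dot_add dot_sc vecs_add vecs_sc)
      ultimately show "w \<in> mv S k ` H" by blast
    qed
  next
    show "mv S k ` H \<subseteq> img (S + outer u v) k"
    proof
      fix w assume "w \<in> mv S k ` H"
      then obtain y where y: "y \<in> vecs k" "dot k v y = 0" "w = mv S k y" unfolding H_def by blast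
      have "w = mv (S + outer u v) k y" using y by (simp add: mv_outer)
      then show "w \<in> img (S + outer u v) k" unfolding img_def using y(1) by blast
    qed
  qed
  have "(card (UNIV::'a set)) ^ rk S k * card K = (card (UNIV::'a set)) * (card (UNIV::'a set)) ^ rk (S + outer u v) k * card K"
  proof -
    have "(card (UNIV::'a set)) ^ k = (card (UNIV::'a set)) * ((card (UNIV::'a set)) ^ rk (S + outer u v) k * card K)"
      using H1 H2 imgH card_img[OF g] by simp
    then show ?thesis using RN by (simp add: mult.assoc)
  qed
  then have "(card (UNIV::'a set)) ^ rk S k = (card (UNIV::'a set)) * (card (UNIV::'a set)) ^ rk (S + outer u v) k"
    using card_ker_pos[of S k] by (simp only: mult_right_cancel mult.assoc[symmetric] neq0_conv[symmetric])
  then have "(card (UNIV::'a set)) ^ rk S k = (card (UNIV::'a set)) ^ Suc (rk (S + outer u v) k)" by (simp only: power_Suc)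
  then have "rk S k = Suc (rk (S + outer u v) k)" by (rule pow_inj[THEN iffD1])
  then show ?thesis by simp
qed

end



lemma outer_zero[simp]: "outer 0 v = 0" "outer u 0 = 0"
  by (simp_all add: outer_def fun_eq_iff)

context mat begin

lemma dot_const:
  assumes v: "v \<in> Kp" and z: "z \<in> vecs k" "z' \<in> vecs k" "mv S k z = mv S k z'"
  shows "dot k v z = dot k v z'"
proof -
  have "z - z' \<in> K" unfolding ker_def using z by (simp add: mv_diff vecs_diff)
  then have "dot k v (z - z') = 0" using v unfolding Kp_def by blast
  then show ?thesis by (simp add: dot_diff)
qed

lemma rk_class:
  assumes u: "u \<in> vecs m" and v: "v \<in> vecs k"
  shows "rk (S + outer u v) k = rk S k + 1 \<longleftrightarrow> u \<notin> W \<and> v \<notin> Kp"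
    and "rk (S + outer u v) k + 1 = rk S k \<longleftrightarrow>
           u \<in> W \<and> v \<in> Kp \<and> (\<exists>z\<in>vecs k. mv S k z = u \<and> dot k v z = -1)"
    and "rk (S + outer u v) k = rk S k \<or> rk (S + outer u v) k = rk S k + 1 \<or> rk (S + outer u v) k + 1 = rk S k"
proof -
  have "(rk (S + outer u v) k = rk S k + 1 \<longleftrightarrow> u \<notin> W \<and> v \<notin> Kp) \<and>
        (rk (S + outer u v) k + 1 = rk S k \<longleftrightarrow>
           u \<in> W \<and> v \<in> Kp \<and> (\<exists>z\<in>vecs k. mv S k z = u \<and> dot k v z = -1)) \<and>
        (rk (S + outer u v) k = rk S k \<or> rk (S + outer u v) k = rk S k + 1 \<or> rk (S + outer u v) k + 1 = rk S k)"
  proof (cases "u \<in> W")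
    case False
    show ?thesis
    proof (cases "v \<in> Kp")
      case True
      then show ?thesis using rk_b[OF u False v True] False by simp
    next
      case f2: False
      then show ?thesis using rk_a[OF u False v f2] False by simp
    qed
  next
    case True
    obtain z where z: "z \<in> vecs k" "mv S k z = u" using True unfolding img_def by blast
    show ?thesis
    proof (cases "v \<in> Kp")
      case False
      then show ?thesis using rk_c[OF True v False] True by simp
    next
      case vK: True
      show ?thesis
      proof (cases "dot k v z = -1")
        case True
        have "rk (S + outer u v) k + 1 = rk S k" by (rule rk_e[OF v vK z True])
        then show ?thesis using True z vK \<open>u \<in> W\<close> by auto
      next
        case False
        have r: "rk (S + outer u v) k = rk S k" by (rule rk_d[OF z False])
        have "\<not> (\<exists>z'\<in>vecs k. mv S k z' = u \<and> dot k v z' = -1)"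
        proof
          assume "\<exists>z'\<in>vecs k. mv S k z' = u \<and> dot k v z' = -1"
          then obtain z' where z': "z' \<in> vecs k" "mv S k z' = u" "dot k v z' = -1" by blast
          have "dot k v z = dot k v z'" using dot_const[OF vK z(1) z'(1)] z(2) z'(2) by simp
          then show False using False z'(3) by simp
        qed
        then show ?thesis using r vK \<open>u \<in> W\<close> by simp
      qed
    qed
  qed
  then show "rk (S + outer u v) k = rk S k + 1 \<longleftrightarrow> u \<notin> W \<and> v \<notin> Kp"
    and "rk (S + outer u v) k + 1 = rk S k \<longleftrightarrow>
           u \<in> W \<and> v \<in> Kp \<and> (\<exists>z\<in>vecs k. mv S k z = u \<and> dot k v z = -1)"
    and "rk (S + outer u v) k = rk S k \<or> rk (S + outer u v) k = rk S k + 1 \<or> rk (S + outer u v) k + 1 = rk S k"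
    by blast+
qed

lemma zero_K: "0 \<in> K" by (simp add: ker_def)
lemma zero_Kp: "0 \<in> Kp" by (simp add: Kp_def)
lemma finKp: "finite Kp" using Kp_vecs card_vecs(2) by (rule finite_subset)

lemma cardKp_mult: "card Kp * card K = card (UNIV::'a set) ^ k"
proof -
  define Q where "Q = card (UNIV::'a set) ^ k"
  define N where "N = card Kp"
  define KK where "KK = card K"
  define qq where "qq = card (UNIV::'a set)"
  have finV: "finite (vecs k :: (nat \<Rightarrow> 'a) set)" by (rule card_vecs(2))
  have cV: "card (vecs k :: (nat \<Rightarrow> 'a) set) = Q" unfolding Q_def by (rule card_vecs(1))
  define T where "T = (\<Sum>v\<in>vecs k. card {x\<in>K. dot k v x = 0})"
  have "T = (\<Sum>v\<in>vecs k. \<Sum>x\<in>K. if dot k v x = 0 then 1 else 0)"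
    unfolding T_def by (rule sum.cong[OF refl], rule card_filter_sum[OF finK])
  also have "\<dots> = (\<Sum>x\<in>K. \<Sum>v\<in>vecs k. if dot k v x = 0 then 1 else 0)" by (rule sum.swap)
  also have "\<dots> = (\<Sum>x\<in>K. card {v\<in>vecs k. dot k v x = 0})"
    by (rule sum.cong[OF refl], rule card_filter_sum[OF finV, symmetric])
  finally have T1: "T = (\<Sum>x\<in>K. card {v\<in>vecs k. dot k v x = 0})" .
  have "qq * T = (\<Sum>x\<in>K. qq * card {v\<in>vecs k. dot k v x = 0})"
    unfolding T1 by (simp add: sum_distrib_left)
  also have "\<dots> = (\<Sum>x\<in>K. if x = 0 then qq * Q else Q)"
  proof (rule sum.cong[OF refl])
    fix x assume x: "x \<in> K"
    then have xv: "x \<in> vecs k" unfolding ker_def by simp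
    show "qq * card {v\<in>vecs k. dot k v x = 0} = (if x = 0 then qq * Q else Q)"
    proof (cases "x = 0")
      case True then show ?thesis using cV by simp
    next
      case False then show ?thesis using dot1_card[OF xv False] cV unfolding qq_def by simp
    qed
  qed
  also have "\<dots> = qq * Q + (\<Sum>x\<in>K - {0}. if x = 0 then qq * Q else Q)"
    by (subst sum.remove[OF finK zero_K]) simp
  also have "\<dots> = qq * Q + (KK - 1) * Q"
    using zero_K finK unfolding KK_def by (simp add: card_Diff_singleton)
  finally have E1: "qq * T = qq * Q + (KK - 1) * Q" .
  have "qq * T = (\<Sum>v\<in>vecs k. qq * card {x\<in>K. dot k v x = 0})"
    unfolding T_def by (simp add: sum_distrib_left)
  also have "\<dots> = (\<Sum>v\<in>vecs k. if v \<in> Kp then qq * KK else KK)"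
  proof (rule sum.cong[OF refl])
    fix v :: "nat \<Rightarrow> 'a" assume v: "v \<in> vecs k"
    show "qq * card {x\<in>K. dot k v x = 0} = (if v \<in> Kp then qq * KK else KK)"
    proof (cases "v \<in> Kp")
      case True
      then have "{x\<in>K. dot k v x = 0} = K" unfolding Kp_def by blast
      then show ?thesis using True unfolding KK_def by simp
    next
      case False
      then obtain x1 where x1: "x1 \<in> K" "dot k v x1 \<noteq> 0" using v unfolding Kp_def by blast
      have "card K = qq * card {x\<in>K. dot k v x = 0}" unfolding qq_def
        by (rule card_functional[where \<phi>="dot k v", OF K_subsp finK _ _ x1]) (simp_all add: dot_add dot_sc)
      then show ?thesis using False unfolding KK_def by simp
    qed
  qed
  also have "\<dots> = (\<Sum>v\<in>vecs k \<inter> {v. v \<in> Kp}. qq * KK) + (\<Sum>v\<in>vecs k \<inter> - {v. v \<in> Kp}. KK)"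
    by (rule sum.If_cases[OF finV])
  also have "vecs k \<inter> {v. v \<in> Kp} = Kp" using Kp_vecs by blast
  also have "vecs k \<inter> - {v. v \<in> Kp} = vecs k - Kp" by blast
  finally have E2': "qq * T = (\<Sum>v\<in>Kp. qq * KK) + (\<Sum>v\<in>vecs k - Kp. KK)" .
  have "card (vecs k - Kp) = Q - N" unfolding N_def using card_Diff_subset[OF finKp Kp_vecs] cV by simp
  then have E2: "qq * T = N * (qq * KK) + (Q - N) * KK" using E2' unfolding N_def by simp
  have NQ: "N \<le> Q" unfolding N_def using card_mono[OF finV Kp_vecs] cV by simp
  have K1: "1 \<le> KK" unfolding KK_def using card_ker_pos[of S k] by simp
  have "int (qq * Q + (KK - 1) * Q) = int (N * (qq * KK) + (Q - N) * KK)" using E1 E2 by simp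
  then have h: "int qq * int Q + (int KK - 1) * int Q = int N * (int qq * int KK) + (int Q - int N) * int KK"
    using NQ K1 by (simp add: of_nat_diff)
  have "(int qq - 1) * (int Q - int N * int KK) = 0" using h by algebra
  moreover have "int qq - 1 \<noteq> 0" using q_ge2[where 'a='a] unfolding qq_def by simp
  ultimately have "int Q = int N * int KK" by simp
  then show ?thesis unfolding Q_def N_def KK_def by (simp only: of_nat_mult[symmetric] of_nat_eq_iff)
qed

lemma cardKp: "card Kp = card (UNIV::'a set) ^ rk S k"
proof -
  have "card Kp * card K = card (UNIV::'a set) ^ rk S k * card K" using cardKp_mult RN by simp
  then show ?thesis using card_ker_pos[of S k] by simp
qed

end



context mat begin

lemma card_Pplus:
  "card {(u,v). u \<in> vecs m \<and> v \<in> vecs k \<and> rk (S + outer u v) k = rk S k + 1}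
     = (card (UNIV::'a set) ^ m - card (UNIV::'a set) ^ rk S k) * (card (UNIV::'a set) ^ k - card (UNIV::'a set) ^ rk S k)"
proof -
  have "{(u,v). u \<in> vecs m \<and> v \<in> vecs k \<and> rk (S + outer u v) k = rk S k + 1} = (vecs m - W) \<times> (vecs k - Kp)"
    using rk_class(1) by blast
  moreover have "card (vecs m - W) = card (UNIV::'a set) ^ m - card (UNIV::'a set) ^ rk S k"
    using card_Diff_subset[OF finW W_vecs] card_vecs(1)[where 'a='a] cardW by simp
  moreover have "card (vecs k - Kp) = card (UNIV::'a set) ^ k - card (UNIV::'a set) ^ rk S k"
    using card_Diff_subset[OF finKp Kp_vecs] card_vecs(1)[where 'a='a] cardKp by simp
  ultimately show ?thesis by (simp add: card_cartesian_product)
qed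

lemma card_Pminus:
  "card {(u,v). u \<in> vecs m \<and> v \<in> vecs k \<and> rk (S + outer u v) k + 1 = rk S k}
     = (card (UNIV::'a set) ^ rk S k - 1) * card (UNIV::'a set) ^ (rk S k - 1)"
proof -
  define P where "P = {(u,v). u \<in> vecs m \<and> v \<in> vecs k \<and> rk (S + outer u v) k + 1 = rk S k}"
  define Z where "Z = Sigma Kp (\<lambda>v. {z\<in>vecs k. dot k v z = -1})"
  define h where "h = (\<lambda>(v::nat\<Rightarrow>'a, z::nat\<Rightarrow>'a). (mv S k z, v))"
  have finZ: "finite Z" unfolding Z_def using finKp card_vecs(2)[where 'a='a and k=k]
    by (intro finite_SigmaI) auto
  have hZ: "h ` Z = P"
  proof
    show "h ` Z \<subseteq> P"
    proof
      fix p assume "p \<in> h ` Z"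
      then obtain v z where vz: "v \<in> Kp" "z \<in> vecs k" "dot k v z = -1" "p = (mv S k z, v)"
        unfolding Z_def h_def by auto
      have v: "v \<in> vecs k" using vz(1) Kp_vecs by blast
      have "mv S k z \<in> vecs m" using mv_vecs[OF S] .
      moreover have "rk (S + outer (mv S k z) v) k + 1 = rk S k" by (rule rk_e[OF v vz(1) vz(2) refl vz(3)])
      ultimately show "p \<in> P" unfolding P_def using vz(4) v by simp
    qed
  next
    show "P \<subseteq> h ` Z"
    proof
      fix p assume "p \<in> P"
      then obtain u v where uv: "p = (u,v)" "u \<in> vecs m" "v \<in> vecs k" "rk (S + outer u v) k + 1 = rk S k"
        unfolding P_def by blast
      then obtain z where z: "v \<in> Kp" "z \<in> vecs k" "mv S k z = u" "dot k v z = -1"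
        using rk_class(2)[OF uv(2) uv(3)] by blast
      have "(v, z) \<in> Z" unfolding Z_def using z by blast
      moreover have "h (v, z) = p" unfolding h_def using z uv(1) by simp
      ultimately show "p \<in> h ` Z" by (metis image_eqI)
    qed
  qed
  have fib: "card {y\<in>Z. h y = p} = card K" if p: "p \<in> h ` Z" for p
  proof -
    obtain v z where vz: "v \<in> Kp" "z \<in> vecs k" "dot k v z = -1" "p = (mv S k z, v)"
      using p unfolding Z_def h_def by auto
    have "{y\<in>Z. h y = p} = (\<lambda>z'. (v, z')) ` {z'\<in>vecs k. mv S k z' = mv S k z}"
    proof
      show "{y\<in>Z. h y = p} \<subseteq> (\<lambda>z'. (v, z')) ` {z'\<in>vecs k. mv S k z' = mv S k z}"
        unfolding Z_def h_def using vz(4) by auto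
      show "(\<lambda>z'. (v, z')) ` {z'\<in>vecs k. mv S k z' = mv S k z} \<subseteq> {y\<in>Z. h y = p}"
      proof
        fix y assume "y \<in> (\<lambda>z'. (v, z')) ` {z'\<in>vecs k. mv S k z' = mv S k z}"
        then obtain z' where z': "y = (v, z')" "z' \<in> vecs k" "mv S k z' = mv S k z" by blast
        have "dot k v z' = dot k v z" by (rule dot_const[OF vz(1) z'(2) vz(2) z'(3)])
        then show "y \<in> {y\<in>Z. h y = p}" unfolding Z_def h_def using z' vz by simp
      qed
    qed
    moreover have "inj (\<lambda>z'. (v, z'))" by (simp add: inj_def)
    ultimately have "card {y\<in>Z. h y = p} = card {z'\<in>vecs k. mv S k z' = mv S k z}"
      by (simp add: card_image inj_on_def)
    also have "\<dots> = card {z'\<in>vecs k. mv S k z' = 0}"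
      by (rule card_hom_fibre[OF subsp_vecs _ vz(2)]) (simp add: mv_add)
    finally show ?thesis unfolding ker_def .
  qed
  have cZ1: "card Z = card P * card K" using card_fibres[OF finZ fib] hZ by simp
  have "card Z = (\<Sum>v\<in>Kp. card {z\<in>vecs k. dot k v z = -1})"
    unfolding Z_def using finKp card_vecs(2)[where 'a='a and k=k] by (subst card_SigmaI) auto
  also have "\<dots> = (\<Sum>v\<in>Kp. if v = 0 then 0 else card (UNIV::'a set) ^ (k - 1))"
  proof (rule sum.cong[OF refl])
    fix v assume v: "v \<in> Kp"
    show "card {z\<in>vecs k. dot k v z = -1} = (if v = 0 then 0 else card (UNIV::'a set) ^ (k - 1))"
    proof (cases "v = 0")
      case True then show ?thesis by simp
    next
      case False
      have vv: "v \<in> vecs k" using v Kp_vecs by blast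
      obtain i where "i < k" using vecs_nz[OF vv False] by blast
      then have k1: "k = Suc (k - 1)" by simp
      have "card (UNIV::'a set) * card {z\<in>vecs k. dot k v z = -1} = card (UNIV::'a set) ^ k"
        using dot2_card(1)[OF vv False] dot2_card(2)[OF vv False, of "-1"] card_vecs(1)[where 'a='a and k=k] by simp
      also have "\<dots> = card (UNIV::'a set) * card (UNIV::'a set) ^ (k - 1)"
        by (subst k1) simp
      finally show ?thesis using False q_ge2[where 'a='a] by simp
    qed
  qed
  also have "\<dots> = (\<Sum>v\<in>Kp - {0}. if v = 0 then 0 else card (UNIV::'a set) ^ (k - 1))"
    using sum.remove[OF finKp zero_Kp, of "\<lambda>v. if v = 0 then 0 else card (UNIV::'a set) ^ (k - 1)"] by simp
  also have "\<dots> = (\<Sum>v\<in>Kp - {0}. card (UNIV::'a set) ^ (k - 1))"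
    by (rule sum.cong) auto
  also have "\<dots> = (card (UNIV::'a set) ^ rk S k - 1) * card (UNIV::'a set) ^ (k - 1)"
    using finKp zero_Kp cardKp by (simp add: card_Diff_singleton)
  finally have cZ2: "card Z = (card (UNIV::'a set) ^ rk S k - 1) * card (UNIV::'a set) ^ (k - 1)" .
  have eq: "card P * card (UNIV::'a set) ^ (k - rk S k) = (card (UNIV::'a set) ^ rk S k - 1) * card (UNIV::'a set) ^ (k - 1)"
    using cZ1 cZ2 cardK by simp
  show ?thesis
  proof (cases "rk S k = 0")
    case True
    then show ?thesis using eq unfolding P_def by simp
  next
    case False
    have "k - 1 = (k - rk S k) + (rk S k - 1)" using False rk_le_k[OF S] by simp
    then have "card P * card (UNIV::'a set) ^ (k - rk S k) =
       ((card (UNIV::'a set) ^ rk S k - 1) * card (UNIV::'a set) ^ (rk S k - 1)) * card (UNIV::'a set) ^ (k - rk S k)"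
      using eq by (simp add: power_add)
    then show ?thesis unfolding P_def using q_ge2[where 'a='a] by simp
  qed
qed

end



lemma outer_eq:
  fixes u v u' v' :: "nat \<Rightarrow> 'a::field"
  assumes nz: "u \<noteq> 0" "v \<noteq> 0" and eq: "outer u' v' = outer u v"
  shows "\<exists>c. c \<noteq> 0 \<and> u' = sc c u \<and> v' = sc (1/c) v"
proof -
  have e: "u' a * v' b = u a * v b" for a b using fun_cong[OF fun_cong[OF eq, of a], of b] by (simp add: outer_def)
  have "\<exists>i. u i \<noteq> 0"
  proof (rule ccontr)
    assume "\<not> (\<exists>i. u i \<noteq> 0)" then have "u = 0" by (intro ext) simp
    then show False using nz by simp
  qed
  then obtain i where i: "u i \<noteq> 0" by blast
  have "\<exists>j. v j \<noteq> 0"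
  proof (rule ccontr)
    assume "\<not> (\<exists>j. v j \<noteq> 0)" then have "v = 0" by (intro ext) simp
    then show False using nz by simp
  qed
  then obtain j where j: "v j \<noteq> 0" by blast
  have "u' i * v' j \<noteq> 0" using e[of i j] i j by simp
  then have ui: "u' i \<noteq> 0" and vj: "v' j \<noteq> 0" by auto
  define c where "c = v j / v' j"
  have c: "c \<noteq> 0" unfolding c_def using j vj by simp
  have u': "u' = sc c u"
  proof
    fix a
    have "u' a * v' j = u a * v j" by (rule e)
    then show "u' a = sc c u a" unfolding c_def using vj by (simp add: field_simps)
  qed
  have v': "v' = sc (1/c) v"
  proof
    fix b
    have "u' i * v' b = u i * v b" by (rule e)
    then have "c * u i * v' b = u i * v b" using u' by simp
    then have "c * v' b = v b" using i by (simp add: mult.assoc mult.left_commute[of "u i"])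
    then show "v' b = sc (1/c) v b" using c by (simp add: field_simps)
  qed
  show ?thesis using c u' v' by blast
qed

definition R1 :: "nat \<Rightarrow> nat \<Rightarrow> (nat \<Rightarrow> nat \<Rightarrow> 'a::field) set" where
  "R1 m k = (\<lambda>(u,v). outer u v) ` ((vecs m - {0}) \<times> (vecs k - {0}))"

lemma sc_nz:
  assumes c: "c \<noteq> 0" and u: "u \<noteq> 0" shows "sc c (u :: nat \<Rightarrow> 'a::field) \<noteq> 0"
proof
  assume s: "sc c u = 0"
  have "\<forall>i. u i = 0"
  proof
    fix i show "u i = 0" using fun_cong[OF s, of i] c by simp
  qed
  then have "u = 0" by (intro ext) simp
  then show False using u by simp
qed

lemma card_pairs_R:
  fixes P :: "(nat \<Rightarrow> nat \<Rightarrow> 'a::{finite,field}) \<Rightarrow> bool"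
  shows "card {p \<in> (vecs m - {0}) \<times> (vecs k - {0}). P (outer (fst p) (snd p))}
       = card {R \<in> R1 m k. P R} * (card (UNIV::'a set) - 1)"
proof -
  define X where "X = {p \<in> (vecs m - {0}) \<times> (vecs k - {0}). P (outer (fst p) (snd p))}"
  define h where "h = (\<lambda>p::(nat\<Rightarrow>'a)\<times>(nat\<Rightarrow>'a). outer (fst p) (snd p))"
  have finX: "finite X" unfolding X_def using card_vecs(2)[where 'a='a and k=m] card_vecs(2)[where 'a='a and k=k]
    by (intro finite_subset[OF _ finite_cartesian_product[of "vecs m" "vecs k"]]) auto
  have hX: "h ` X = {R \<in> R1 m k. P R}"
  proof
    show "h ` X \<subseteq> {R \<in> R1 m k. P R}" unfolding X_def h_def R1_def by auto
    show "{R \<in> R1 m k. P R} \<subseteq> h ` X"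
    proof
      fix R assume R: "R \<in> {R \<in> R1 m k. P R}"
      then obtain p where p0: "p \<in> (vecs m - {0}) \<times> (vecs k - {0})" "R = (\<lambda>(u,v). outer u v) p"
        unfolding R1_def by blast
      have p: "p \<in> (vecs m - {0}) \<times> (vecs k - {0})" "R = outer (fst p) (snd p)" "P R"
        using p0 R by (cases p, simp)+
      then have "p \<in> X" unfolding X_def by simp
      then show "R \<in> h ` X" unfolding h_def using p(2) by blast
    qed
  qed
  have fib: "card {y\<in>X. h y = R} = card (UNIV::'a set) - 1" if R: "R \<in> h ` X" for R
  proof -
    obtain p where p: "p \<in> X" "R = h p" using R by blast
    obtain u v where puv: "p = (u, v)" by (cases p)
    have uv: "u \<in> vecs m" "u \<noteq> 0" "v \<in> vecs k" "v \<noteq> 0" "P (outer u v)" "R = outer u v"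
      using p puv unfolding X_def h_def by auto
    define f where "f = (\<lambda>c. (sc c u, sc (1/c) v))"
    have "{y\<in>X. h y = R} = f ` (UNIV - {0})"
    proof
      show "{y\<in>X. h y = R} \<subseteq> f ` (UNIV - {0})"
      proof
        fix y assume y: "y \<in> {y\<in>X. h y = R}"
        obtain u' v' where y': "y = (u', v')" by (cases y)
        have "outer u' v' = outer u v" using y y' uv(6) unfolding h_def by simp
        then obtain c where "c \<noteq> 0" "u' = sc c u" "v' = sc (1/c) v" using outer_eq[OF uv(2) uv(4)] by blast
        then show "y \<in> f ` (UNIV - {0})" unfolding f_def using y' by blast
      qed
    next
      show "f ` (UNIV - {0}) \<subseteq> {y\<in>X. h y = R}"
      proof
        fix y assume "y \<in> f ` (UNIV - {0})"
        then obtain c where c: "c \<noteq> 0" "y = (sc c u, sc (1/c) v)" unfolding f_def by blast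
        have o: "outer (sc c u) (sc (1/c) v) = outer u v"
          unfolding outer_def using c(1) by (simp add: fun_eq_iff)
        have "sc c u \<in> vecs m - {0}" using sc_nz[OF c(1) uv(2)] vecs_sc[OF uv(1)] by blast
        moreover have "sc (1/c) v \<in> vecs k - {0}" using sc_nz[of "1/c" v] c(1) uv(4) vecs_sc[OF uv(3)] by simp
        ultimately show "y \<in> {y\<in>X. h y = R}" unfolding X_def h_def using c(2) o uv(5) uv(6) by simp
      qed
    qed
    moreover have "inj_on f (UNIV - {0})"
    proof
      fix c c' assume "c \<in> UNIV - {0}" "c' \<in> UNIV - {0}" "f c = f c'"
      then have "sc c u = sc c' u" unfolding f_def by simp
      moreover obtain i where "u i \<noteq> 0"
      proof -
        have "\<exists>i. u i \<noteq> 0"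
        proof (rule ccontr)
          assume "\<not> (\<exists>i. u i \<noteq> 0)" then have "u = 0" by (intro ext) simp
          then show False using uv(2) by simp
        qed
        then show ?thesis using that by blast
      qed
      ultimately have "sc c u i = sc c' u i" by simp
      then have "c * u i = c' * u i" by simp
      then show "c = c'" using \<open>u i \<noteq> 0\<close> by simp
    qed
    ultimately have "card {y\<in>X. h y = R} = card (UNIV - {0::'a})" by (simp add: card_image)
    also have "\<dots> = card (UNIV::'a set) - 1" by (simp add: card_Diff_singleton)
    finally show ?thesis .
  qed
  show ?thesis using card_fibres[OF finX fib] hX unfolding X_def h_def by simp
qed

context mat begin

lemma count_plus:
  "card {R \<in> R1 m k. rk (S + R) k = rk S k + 1} * (card (UNIV::'a set) - 1)
     = (card (UNIV::'a set) ^ m - card (UNIV::'a set) ^ rk S k) * (card (UNIV::'a set) ^ k - card (UNIV::'a set) ^ rk S k)"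
proof -
  have "{p \<in> (vecs m - {0}) \<times> (vecs k - {0}). rk (S + outer (fst p) (snd p)) k = rk S k + 1}
     = {(u,v). u \<in> vecs m \<and> v \<in> vecs k \<and> rk (S + outer u v) k = rk S k + 1}"
    by auto
  then show ?thesis using card_pairs_R[of m k "\<lambda>R. rk (S + R) k = rk S k + 1"] card_Pplus by simp
qed

lemma count_minus:
  "card {R \<in> R1 m k. rk (S + R) k + 1 = rk S k} * (card (UNIV::'a set) - 1)
     = (card (UNIV::'a set) ^ rk S k - 1) * card (UNIV::'a set) ^ (rk S k - 1)"
proof -
  have "{p \<in> (vecs m - {0}) \<times> (vecs k - {0}). rk (S + outer (fst p) (snd p)) k + 1 = rk S k}
     = {(u,v). u \<in> vecs m \<and> v \<in> vecs k \<and> rk (S + outer u v) k + 1 = rk S k}"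
    by auto
  then show ?thesis using card_pairs_R[of m k "\<lambda>R. rk (S + R) k + 1 = rk S k"] card_Pminus by simp
qed

lemma R1_class:
  assumes "R \<in> R1 m k"
  shows "rk (S + R) k = rk S k \<or> rk (S + R) k = rk S k + 1 \<or> rk (S + R) k + 1 = rk S k"
  using assms rk_class(3) unfolding R1_def by auto

lemma exists_down:
  assumes "1 \<le> rk S k"
  shows "\<exists>R \<in> R1 m k. rk (S + R) k + 1 = rk S k"
proof -
  have "2 ^ rk S k \<le> card (UNIV::'a set) ^ rk S k" using q_ge2[where 'a='a] by (simp add: power_mono)
  moreover have "(2::nat) ^ 1 \<le> 2 ^ rk S k" using assms by (intro power_increasing) simp_all
  ultimately have "0 < (card (UNIV::'a set) ^ rk S k - 1) * card (UNIV::'a set) ^ (rk S k - 1)"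
    using q_ge2[where 'a='a] by simp
  then have "card {R \<in> R1 m k. rk (S + R) k + 1 = rk S k} \<noteq> 0"
    using count_minus by (intro notI) simp
  show ?thesis
  proof (rule ccontr)
    assume "\<not> (\<exists>R \<in> R1 m k. rk (S + R) k + 1 = rk S k)"
    then have "{R \<in> R1 m k. rk (S + R) k + 1 = rk S k} = {}" by blast
    then have "card {R \<in> R1 m k. rk (S + R) k + 1 = rk S k} = 0" by (simp only: card.empty)
    then show False using \<open>card {R \<in> R1 m k. rk (S + R) k + 1 = rk S k} \<noteq> 0\<close> by blast
  qed
qed

end

lemma R1_matM: "R \<in> R1 m k \<Longrightarrow> R \<in> matM m k"
  unfolding R1_def by (auto simp: matM_def vecs_def outer_def)




lemma mv_pt: "j < k \<Longrightarrow> mv S k (pt j 1) = (\<lambda>i. S i j)"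
proof
  fix i assume j: "j < k"
  have "mv S k (pt j 1) i = (\<Sum>t<k. if t = j then S i j else 0)"
    unfolding mv_def pt_def by (intro sum.cong refl) simp
  also have "\<dots> = S i j" using j by simp
  finally show "mv S k (pt j 1) i = S i j" .
qed

lemma rk_zero_imp:
  assumes S: "(S :: nat \<Rightarrow> nat \<Rightarrow> 'a::{finite,field}) \<in> matM m k" and r: "rk S k = 0"
  shows "S = 0"
proof -
  have c: "card (img S k) = 1" using card_img[OF S] r by simp
  have "0 \<in> img S k" unfolding img_def by (rule image_eqI[where x=0]) auto
  then have I: "img S k = {0}" using c by (metis card_1_singletonE singletonD)
  have "S i j = 0" for i j
  proof (cases "j < k")
    case True
    have "mv S k (pt j 1) \<in> img S k" unfolding img_def using pt_vecs[OF True] by blast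
    then have "mv S k (pt j 1) = 0" using I by blast
    then show ?thesis using mv_pt[OF True, of S] by (metis zero_fun_def)
  next
    case False
    then show ?thesis using S unfolding matM_def by simp
  qed
  then show ?thesis by (intro ext) simp
qed

lemma rk_zero: "rk (0 :: nat \<Rightarrow> nat \<Rightarrow> 'a::{finite,field}) k = 0"
proof -
  have "img (0 :: nat \<Rightarrow> nat \<Rightarrow> 'a) k = {0}"
  proof
    show "img (0 :: nat \<Rightarrow> nat \<Rightarrow> 'a) k \<subseteq> {0}" unfolding img_def mv_def by (auto simp: fun_eq_iff)
    show "{0} \<subseteq> img (0 :: nat \<Rightarrow> nat \<Rightarrow> 'a) k" unfolding img_def by (auto intro: image_eqI[where x=0])
  qed
  then show ?thesis unfolding rk_def by (intro dimq_eq) simp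
qed

definition Eid :: "nat \<Rightarrow> nat \<Rightarrow> nat \<Rightarrow> nat \<Rightarrow> 'a::{zero,one}" where
  "Eid m k = (\<lambda>i j. if i = j \<and> i < min m k then 1 else 0)"

lemma Eid_matM: "Eid m k \<in> matM m k"
  by (simp add: Eid_def matM_def)

lemma mv_Eid: "mv (Eid m k) k x = (\<lambda>i. if i < min m k then x i else 0)"
proof
  fix i
  show "mv (Eid m k) k x i = (if i < min m k then x i else 0)"
  proof (cases "i < min m k")
    case True
    have "mv (Eid m k) k x i = (\<Sum>j<k. if j = i then x i else 0)"
      unfolding mv_def Eid_def by (intro sum.cong refl) (use True in auto)
    also have "\<dots> = x i" using True by simp
    finally show ?thesis using True by simp
  next
    case False
    have "mv (Eid m k) k x i = (\<Sum>j<k. 0)"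
      unfolding mv_def Eid_def by (intro sum.cong refl) (use False in auto)
    then show ?thesis using False by auto
  qed
qed

lemma rk_Eid: "rk (Eid m k :: nat \<Rightarrow> nat \<Rightarrow> 'a::{finite,field}) k = min m k"
proof -
  have "img (Eid m k :: nat \<Rightarrow> nat \<Rightarrow> 'a) k = vecs (min m k)"
  proof
    show "img (Eid m k :: nat \<Rightarrow> nat \<Rightarrow> 'a) k \<subseteq> vecs (min m k)"
      unfolding img_def by (auto simp: mv_Eid vecs_def)
    show "vecs (min m k) \<subseteq> img (Eid m k :: nat \<Rightarrow> nat \<Rightarrow> 'a) k"
    proof
      fix y :: "nat \<Rightarrow> 'a" assume y: "y \<in> vecs (min m k)"
      then have "y \<in> vecs k" unfolding vecs_def by simp
      moreover have "mv (Eid m k) k y = y" unfolding mv_Eid using y unfolding vecs_def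
        by (auto simp: fun_eq_iff)
      ultimately show "y \<in> img (Eid m k) k" unfolding img_def by (metis image_eqI)
    qed
  qed
  then show ?thesis unfolding rk_def by (intro dimq_eq) (simp add: card_vecs(1))
qed

lemma rk_plus_le:
  assumes "(S :: nat \<Rightarrow> nat \<Rightarrow> 'a::{finite,field}) \<in> matM m k" "u \<in> vecs m" "v \<in> vecs k"
  shows "rk (S + outer u v) k \<le> rk S k + 1"
  using mat.rk_class(3)[OF mat.intro[OF assms(1)] assms(2,3)] by auto




definition col :: "(nat \<Rightarrow> nat \<Rightarrow> 'a::zero) \<Rightarrow> nat \<Rightarrow> nat \<Rightarrow> nat \<Rightarrow> 'a" where
  "col M m j = (\<lambda>i. if i < m then M i j else 0)"

lemma col_vecs: "col M m j \<in> vecs m" by (simp add: col_def vecs_def)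

lemma ham_col_nz:
  assumes "hamming_pcm M m nn" "j < nn" shows "col M m j \<noteq> 0"
proof
  assume c: "col M m j = 0"
  obtain i where "i < m" "M i j \<noteq> 0" using assms unfolding hamming_pcm_def by blast
  then show False using fun_cong[OF c, of i] by (simp add: col_def)
qed

lemma ham_rep:
  assumes h: "hamming_pcm M m nn" and u: "u \<in> vecs m" "u \<noteq> 0"
  shows "\<exists>j<nn. \<exists>c. c \<noteq> 0 \<and> col M m j = sc c u"
proof -
  obtain i where "i < m" "u i \<noteq> 0" using vecs_nz[OF u] by blast
  then have "\<exists>i<m. u i \<noteq> 0" by blast
  then obtain j c where j: "j < nn" "c \<noteq> 0" "\<forall>i<m. M i j = c * u i"
    using h u(1) unfolding hamming_pcm_def by blast
  have "col M m j = sc c u"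
  proof
    fix i show "col M m j i = sc c u i"
      using j(3) u(1) by (cases "i < m") (simp_all add: col_def vecs_def)
  qed
  then show ?thesis using j by blast
qed

lemma ham_uniq:
  assumes h: "hamming_pcm M m nn" and j: "j < nn" "j' < nn" and c: "c \<noteq> 0"
    and e: "col M m j' = sc c (col M m j)"
  shows "j' = j"
proof -
  define v where "v = col M m j"
  have v: "v \<in> vecs m" "v \<noteq> 0" unfolding v_def using col_vecs ham_col_nz[OF h j(1)] by auto
  obtain i where "i < m" "v i \<noteq> 0" using vecs_nz[OF v] by blast
  then have "\<exists>i<m. v i \<noteq> 0" by blast
  then have ex1: "\<exists>!jj. jj < nn \<and> (\<exists>c. c \<noteq> 0 \<and> (\<forall>i<m. M i jj = c * v i))"
    using h v(1) unfolding hamming_pcm_def by blast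
  have a: "j < nn \<and> (\<exists>c. c \<noteq> 0 \<and> (\<forall>i<m. M i j = c * v i))"
    using j(1) by (intro conjI exI[of _ 1]) (simp_all add: v_def col_def)
  have b: "j' < nn \<and> (\<exists>c. c \<noteq> 0 \<and> (\<forall>i<m. M i j' = c * v i))"
  proof (intro conjI exI[of _ c] allI impI)
    show "j' < nn" by (rule j(2))
    show "c \<noteq> 0" by (rule c)
    fix i assume "i < m"
    then show "M i j' = c * v i" using fun_cong[OF e, of i] by (simp add: v_def col_def)
  qed
  show ?thesis using ex1 a b by blast
qed

lemma matM_add: "(S :: nat \<Rightarrow> nat \<Rightarrow> 'a::monoid_add) \<in> matM m k \<Longrightarrow> R \<in> matM m k \<Longrightarrow> S + R \<in> matM m k"
  by (simp add: matM_def)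

locale code_setup =
  fixes A B :: "nat \<Rightarrow> nat \<Rightarrow> 'a::{finite,field}" and ma mb na nb :: nat
  assumes hA: "hamming_pcm A ma na" and hB: "hamming_pcm B mb nb"
    and nb_pos: "0 < nb"
begin

abbreviation "n \<equiv> na * nb"

definition synd :: "(nat \<Rightarrow> 'a) \<Rightarrow> nat \<Rightarrow> nat \<Rightarrow> 'a" where
  "synd x = (\<lambda>i j. if i < ma \<and> j < mb then \<Sum>s<n. A i (s div nb) * B j (s mod nb) * x s else 0)"

definition wt :: "(nat \<Rightarrow> 'a) \<Rightarrow> nat" where "wt z = card {i. i < n \<and> z i \<noteq> 0}"

lemma synd_matM: "synd x \<in> matM ma mb" by (simp add: synd_def matM_def)

lemma synd_add: "synd (x + y) = synd x + synd y"
  by (simp add: synd_def fun_eq_iff distrib_left sum.distrib)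

lemma synd_zero[simp]: "synd 0 = 0"
  by (simp add: synd_def fun_eq_iff)

lemma synd_diff: "synd (x - y) = synd x - synd y"
  by (simp add: synd_def fun_eq_iff algebra_simps sum_subtractf)

lemma pos_decomp: "s < n \<Longrightarrow> s div nb < na \<and> s mod nb < nb"
  using nb_pos by (simp add: less_mult_imp_div_less)

lemma synd_pt:
  assumes s: "s < n"
  shows "synd (pt s c) = outer (sc c (col A ma (s div nb))) (col B mb (s mod nb))"
proof (intro ext)
  fix i j
  show "synd (pt s c) i j = outer (sc c (col A ma (s div nb))) (col B mb (s mod nb)) i j"
  proof (cases "i < ma \<and> j < mb")
    case True
    have "synd (pt s c) i j = (\<Sum>t<n. A i (t div nb) * B j (t mod nb) * pt s c t)"
      using True by (simp add: synd_def)
    also have "\<dots> = (\<Sum>t<n. if t = s then A i (s div nb) * B j (s mod nb) * c else 0)"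
      unfolding pt_def by (intro sum.cong refl) simp
    also have "\<dots> = A i (s div nb) * B j (s mod nb) * c" using s by simp
    finally show ?thesis using True by (simp add: outer_def col_def)
  next
    case False
    then show ?thesis by (auto simp: synd_def outer_def col_def)
  qed
qed

lemma synd_pt_R1:
  assumes s: "s < n" and c: "c \<noteq> 0"
  shows "synd (pt s c) \<in> R1 ma mb"
proof -
  have "sc c (col A ma (s div nb)) \<in> vecs ma - {0}"
    using sc_nz[OF c ham_col_nz[OF hA]] pos_decomp[OF s] col_vecs vecs_sc by blast
  moreover have "col B mb (s mod nb) \<in> vecs mb - {0}"
    using ham_col_nz[OF hB] pos_decomp[OF s] col_vecs by blast
  ultimately show ?thesis unfolding synd_pt[OF s] R1_def by (intro image_eqI[where x="(sc c (col A ma (s div nb)), col B mb (s mod nb))"]) auto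
qed

lemma R1_synd:
  assumes R: "R \<in> R1 ma mb"
  shows "\<exists>s<n. \<exists>c. c \<noteq> 0 \<and> R = synd (pt s c)"
proof -
  obtain p where p: "p \<in> (vecs ma - {0}) \<times> (vecs mb - {0})" "R = (\<lambda>(u,v). outer u v) p"
    using R unfolding R1_def by blast
  obtain u v where uv: "p = (u, v)" by (cases p)
  have u: "u \<in> vecs ma" "u \<noteq> 0" and v: "v \<in> vecs mb" "v \<noteq> 0" and Ruv: "R = outer u v"
    using p uv by auto
  obtain j c where j: "j < na" "c \<noteq> 0" "col A ma j = sc c u" using ham_rep[OF hA u] by blast
  obtain jb d where jb: "jb < nb" "d \<noteq> 0" "col B mb jb = sc d v" using ham_rep[OF hB v] by blast
  define s where "s = j * nb + jb"
  have "(j + 1) * nb \<le> na * nb" using j(1) by (intro mult_le_mono1) simp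
  then have s: "s < n" unfolding s_def using jb(1) by simp
  have sd: "s div nb = j" "s mod nb = jb" unfolding s_def using jb(1) by simp_all
  define e where "e = 1 / (c * d)"
  have e: "e \<noteq> 0" unfolding e_def using j(2) jb(2) by simp
  have "R = synd (pt s e)"
    unfolding synd_pt[OF s] sd j(3) jb(3) Ruv
  proof (intro ext)
    fix a b
    show "outer u v a b = outer (sc e (sc c u)) (sc d v) a b"
      unfolding outer_def e_def using j(2) jb(2) by (simp add: field_simps)
  qed
  then show ?thesis using s e by blast
qed

lemma synd_pt_inj:
  assumes s: "s < n" "s' < n" and c: "c \<noteq> 0" "c' \<noteq> 0" and eq: "synd (pt s c) = synd (pt s' c')"
  shows "s = s' \<and> c = c'"
proof -
  define a where "a = col A ma (s div nb)"
  define a' where "a' = col A ma (s' div nb)"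
  define b where "b = col B mb (s mod nb)"
  define b' where "b' = col B mb (s' mod nb)"
  have d1: "s div nb < na" "s' div nb < na" "s mod nb < nb" "s' mod nb < nb"
    using pos_decomp[OF s(1)] pos_decomp[OF s(2)] by simp_all
  have anz: "a \<noteq> 0" "a' \<noteq> 0" unfolding a_def a'_def using ham_col_nz[OF hA d1(1)] ham_col_nz[OF hA d1(2)] by simp_all
  have bnz: "b \<noteq> 0" unfolding b_def using ham_col_nz[OF hB d1(3)] by simp
  have "outer (sc c' a') b' = outer (sc c a) b" using eq unfolding synd_pt[OF s(1)] synd_pt[OF s(2)] a_def a'_def b_def b'_def by simp
  then obtain e where e: "e \<noteq> 0" "sc c' a' = sc e (sc c a)" "b' = sc (1/e) b"
    using outer_eq[OF sc_nz[OF c(1) anz(1)] bnz] by blast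
  have j1: "s' mod nb = s mod nb"
    by (rule ham_uniq[OF hB d1(3) d1(4) _ e(3)[unfolded b_def b'_def]]) (use e(1) in simp)
  have "a' = sc (e * c / c') a"
  proof
    fix i have "c' * a' i = e * (c * a i)" using fun_cong[OF e(2), of i] by simp
    then show "a' i = sc (e * c / c') a i" using c(2) by (simp add: field_simps)
  qed
  moreover have "e * c / c' \<noteq> 0" using e(1) c by simp
  ultimately have j2: "s' div nb = s div nb"
    using ham_uniq[OF hA d1(1) d1(2), of "e * c / c'"] unfolding a_def a'_def by blast
  have ss: "s = s'"
  proof -
    have "s = s div nb * nb + s mod nb" by simp
    also have "\<dots> = s' div nb * nb + s' mod nb" using j1 j2 by simp
    also have "\<dots> = s'" by simp
    finally show ?thesis .
  qed
  have bb: "b' = b" unfolding b_def b'_def using ss by simp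
  then have bb: "b = sc (1/e) b" using e(3) by simp
  have bv: "b \<in> vecs mb" unfolding b_def by (rule col_vecs)
  obtain i where bi: "b i \<noteq> 0" using vecs_nz[OF bv bnz] by blast
  have "b i = sc (1/e) b i" using bb by (rule fun_cong)
  then have "b i = (1/e) * b i" by (simp only: sc_simps)
  then have "(1/e) * b i = 1 * b i" by simp
  then have "b i = 0 \<or> 1/e = 1" by (simp only: mult_cancel_right)
  then have "1/e = 1" using bi by blast
  then have e1: "e = 1" by simp
  have aa: "a' = a" unfolding a_def a'_def using ss by simp
  then have sca: "sc c' a = sc c a" using e(2) e1 by simp
  have av: "a \<in> vecs ma" unfolding a_def by (rule col_vecs)
  obtain i' where ai: "a i' \<noteq> 0" using vecs_nz[OF av anz(1)] by blast
  have "sc c' a i' = sc c a i'" using sca by (rule fun_cong)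
  then have "c' * a i' = c * a i'" by (simp only: sc_simps)
  then have "a i' = 0 \<or> c' = c" by (simp only: mult_cancel_right)
  then have "c = c'" using ai by blast
  then show ?thesis using ss by simp
qed

end



context code_setup begin

lemma hdist_wt: "hdist n x y = wt (x - y)"
  unfolding hdist_def wt_def by simp

lemma wt_sym: "wt (x - y) = wt (y - x)"
proof -
  have "{i. i < n \<and> (x - y) i \<noteq> 0} = {i. i < n \<and> (y - x) i \<noteq> 0}" by auto
  then show ?thesis unfolding wt_def by simp
qed

lemma wt_zero: "wt 0 = 0" unfolding wt_def by simp

lemma synd_vecs_eq: "x \<in> vecs n \<Longrightarrow> y \<in> vecs n \<Longrightarrow> synd x = synd y \<Longrightarrow> synd (x - y) = 0"
  by (simp add: synd_diff)

lemma rk_synd_le: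
  assumes "y \<in> vecs n" shows "rk (synd y) mb \<le> wt y"
proof -
  have "\<forall>y\<in>vecs n. wt y = w \<longrightarrow> rk (synd y) mb \<le> w" for w
  proof (induction w)
    case 0
    show ?case
    proof (intro ballI impI)
      fix y :: "nat \<Rightarrow> 'a" assume y: "y \<in> vecs n" "wt y = 0"
      have "{i. i < n \<and> y i \<noteq> 0} = {}" using y(2) unfolding wt_def by simp
      have "\<forall>i. y i = 0"
      proof
        fix i show "y i = 0"
        proof (cases "i < n")
          case True then show ?thesis using \<open>{i. i < n \<and> y i \<noteq> 0} = {}\<close> by blast
        next
          case False then show ?thesis using y(1) unfolding vecs_def by simp
        qed
      qed
      then have "y = 0" by (intro ext) simp
      then show "rk (synd y) mb \<le> 0" using rk_zero[where 'a='a] by simp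
    qed
  next
    case (Suc w)
    show ?case
    proof (intro ballI impI)
      fix y :: "nat \<Rightarrow> 'a" assume y: "y \<in> vecs n" "wt y = Suc w"
      have "{i. i < n \<and> y i \<noteq> 0} \<noteq> {}" using y(2) unfolding wt_def by (intro notI) simp
      then obtain s where s: "s < n" "y s \<noteq> 0" by blast
      define y' where "y' = y - pt s (y s)"
      have y'v: "y' \<in> vecs n" unfolding y'_def using y(1) pt_vecs[OF s(1)] by blast
      have "{i. i < n \<and> y' i \<noteq> 0} = {i. i < n \<and> y i \<noteq> 0} - {s}"
        unfolding y'_def pt_def by auto
      then have "wt y' = w" using y(2) s unfolding wt_def by (simp add: card_Diff_singleton)
      then have IH: "rk (synd y') mb \<le> w" using Suc.IH y'v by blast
      have yeq: "y' + pt s (y s) = y" unfolding y'_def by simp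
      have "synd y = synd (y' + pt s (y s))" by (simp only: yeq)
      also have "\<dots> = synd y' + synd (pt s (y s))" by (rule synd_add)
      finally have "synd y = synd y' + synd (pt s (y s))" .
      also have "\<dots> = synd y' + outer (sc (y s) (col A ma (s div nb))) (col B mb (s mod nb))"
        using synd_pt[OF s(1)] by simp
      finally have "rk (synd y) mb = rk (synd y' + outer (sc (y s) (col A ma (s div nb))) (col B mb (s mod nb))) mb"
        by simp
      also have "\<dots> \<le> rk (synd y') mb + 1"
        by (rule rk_plus_le[OF synd_matM vecs_sc[OF col_vecs] col_vecs])
      finally show "rk (synd y) mb \<le> Suc w" using IH by simp
    qed
  qed
  then show ?thesis using assms by blast
qed

lemma synd_realize:
  assumes "S \<in> matM ma mb"
  shows "\<exists>y\<in>vecs n. synd y = S \<and> wt y \<le> rk S mb"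
proof -
  have "\<forall>S\<in>matM ma mb. rk S mb = l \<longrightarrow> (\<exists>y\<in>vecs n. synd y = S \<and> wt y \<le> l)" for l
  proof (induction l)
    case 0
    show ?case
    proof (intro ballI impI)
      fix S :: "nat \<Rightarrow> nat \<Rightarrow> 'a" assume S: "S \<in> matM ma mb" "rk S mb = 0"
      have "S = 0" by (rule rk_zero_imp[OF S])
      then show "\<exists>y\<in>vecs n. synd y = S \<and> wt y \<le> 0"
        by (intro bexI[of _ 0]) (simp_all add: wt_zero)
    qed
  next
    case (Suc l)
    show ?case
    proof (intro ballI impI)
      fix S :: "nat \<Rightarrow> nat \<Rightarrow> 'a" assume S: "S \<in> matM ma mb" "rk S mb = Suc l"
      interpret M: mat S ma mb by (rule mat.intro[OF S(1)])
      obtain R where R: "R \<in> R1 ma mb" "rk (S + R) mb + 1 = rk S mb"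
        using M.exists_down S(2) by auto
      have SR: "S + R \<in> matM ma mb" by (rule matM_add[OF S(1) R1_matM[OF R(1)]])
      have "rk (S + R) mb = l" using R(2) S(2) by simp
      then obtain y' where y': "y' \<in> vecs n" "synd y' = S + R" "wt y' \<le> l"
        using Suc.IH SR by blast
      obtain s c where sc: "s < n" "c \<noteq> 0" "R = synd (pt s c)" using R1_synd[OF R(1)] by blast
      define y where "y = y' - pt s c"
      have yv: "y \<in> vecs n" unfolding y_def using y'(1) pt_vecs[OF sc(1)] by blast
      have "synd y = S" unfolding y_def synd_diff y'(2) sc(3)[symmetric] by simp
      moreover have "wt y \<le> Suc l"
      proof -
        have "{i. i < n \<and> y i \<noteq> 0} \<subseteq> insert s {i. i < n \<and> y' i \<noteq> 0}"
          unfolding y_def pt_def by auto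
        then have "wt y \<le> card (insert s {i. i < n \<and> y' i \<noteq> 0})"
          unfolding wt_def by (intro card_mono) auto
        also have "\<dots> \<le> Suc (wt y')" unfolding wt_def by (simp add: card_insert_if)
        finally show ?thesis using y'(3) by simp
      qed
      ultimately show "\<exists>y\<in>vecs n. synd y = S \<and> wt y \<le> Suc l" using yv by blast
    qed
  qed
  then show ?thesis using assms by blast
qed

lemma synd_surj: "synd ` vecs n = matM ma mb"
proof
  show "synd ` vecs n \<subseteq> matM ma mb" using synd_matM by blast
  show "matM ma mb \<subseteq> synd ` vecs n"
  proof
    fix S :: "nat \<Rightarrow> nat \<Rightarrow> 'a" assume "S \<in> matM ma mb"
    then obtain y where "y \<in> vecs n" "synd y = S" using synd_realize by blast
    then show "S \<in> synd ` vecs n" by blast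
  qed
qed

end



lemma card_matM:
  assumes k: "0 < k"
  shows "card (matM m k :: (nat \<Rightarrow> nat \<Rightarrow> 'a::{finite,zero}) set) = card (UNIV::'a set) ^ (m * k)"
    and "finite (matM m k :: (nat \<Rightarrow> nat \<Rightarrow> 'a::{finite,zero}) set)"
proof -
  define f where "f = (\<lambda>(S::nat \<Rightarrow> nat \<Rightarrow> 'a) r. if r < m * k then S (r div k) (r mod k) else 0)"
  define g where "g = (\<lambda>(v::nat \<Rightarrow> 'a) i j. if i < m \<and> j < k then v (i * k + j) else 0)"
  have b: "bij_betw f (matM m k) (vecs (m * k))"
  proof (rule bij_betwI[where g=g])
    show "f \<in> matM m k \<rightarrow> vecs (m * k)" unfolding f_def vecs_def by auto
    show "g \<in> vecs (m * k) \<rightarrow> matM m k" unfolding g_def matM_def by auto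
    show "g (f S) = S" if S: "S \<in> matM m k" for S
    proof (intro ext)
      fix i j
      show "g (f S) i j = S i j"
      proof (cases "i < m \<and> j < k")
        case True
        have "(i + 1) * k \<le> m * k" using True by (intro mult_le_mono1) simp
        then have "i * k + j < m * k" using True by simp
        then show ?thesis unfolding g_def f_def using True by simp
      next
        case False
        then show ?thesis using S unfolding g_def matM_def by auto
      qed
    qed
    show "f (g v) = v" if v: "v \<in> vecs (m * k)" for v
    proof (intro ext)
      fix r
      show "f (g v) r = v r"
      proof (cases "r < m * k")
        case True
        have "r div k < m" using True by (simp add: less_mult_imp_div_less)
        moreover have "r mod k < k" using k by simp
        moreover have "r div k * k + r mod k = r" by simp
        ultimately show ?thesis unfolding f_def g_def using True by simp
      next
        case False
        then show ?thesis using v unfolding f_def vecs_def by simp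
      qed
    qed
  qed
  show "card (matM m k :: (nat \<Rightarrow> nat \<Rightarrow> 'a) set) = card (UNIV::'a set) ^ (m * k)"
    using bij_betw_same_card[OF b] card_vecs(1)[where 'a='a] by simp
  show "finite (matM m k :: (nat \<Rightarrow> nat \<Rightarrow> 'a) set)"
    using bij_betw_finite[OF b] card_vecs(2)[where 'a='a] by simp
qed

locale code2 = code_setup +
  assumes mb_pos: "0 < mb"
begin

definition "CC = kernel_code (kron A B mb nb) (ma * mb) n"

lemma C_eq: "CC = {x\<in>vecs n. synd x = 0}"
proof -
  have "(\<forall>r<ma * mb. (\<Sum>s<n. kron A B mb nb r s * x s) = 0) \<longleftrightarrow> synd x = 0" for x
  proof
    assume h: "\<forall>r<ma * mb. (\<Sum>s<n. kron A B mb nb r s * x s) = 0"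
    show "synd x = 0"
    proof (intro ext)
      fix i j
      show "synd x i j = 0 i j"
      proof (cases "i < ma \<and> j < mb")
        case True
        have "(i + 1) * mb \<le> ma * mb" using True by (intro mult_le_mono1) simp
        then have r: "i * mb + j < ma * mb" using True by simp
        have d: "(i * mb + j) div mb = i" "(i * mb + j) mod mb = j" using True by simp_all
        have "(\<Sum>s<n. kron A B mb nb (i * mb + j) s * x s) = 0" using h r by blast
        then show ?thesis using True unfolding synd_def kron_def d by simp
      next
        case False then show ?thesis unfolding synd_def by auto
      qed
    qed
  next
    assume h: "synd x = 0"
    show "\<forall>r<ma * mb. (\<Sum>s<n. kron A B mb nb r s * x s) = 0"
    proof (intro allI impI)
      fix r assume r: "r < ma * mb"
      have i: "r div mb < ma" using r by (simp add: less_mult_imp_div_less)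
      have j: "r mod mb < mb" using mb_pos by simp
      have "synd x (r div mb) (r mod mb) = 0" using h by simp
      then show "(\<Sum>s<n. kron A B mb nb r s * x s) = 0" using i j unfolding synd_def kron_def by simp
    qed
  qed
  then show ?thesis unfolding CC_def kernel_code_def by blast
qed

lemma CC_vecs: "CC \<subseteq> vecs n" unfolding C_eq by blast
lemma finC: "finite CC" using CC_vecs card_vecs(2) by (rule finite_subset)
lemma zero_C: "0 \<in> CC" unfolding C_eq by simp

lemma dist_eq:
  assumes x: "x \<in> vecs n" shows "dist_code n CC x = rk (synd x) mb"
  unfolding dist_code_def
proof (rule Min_eqI)
  show "finite (hdist n x ` CC)" using finC by simp
  show "rk (synd x) mb \<le> d" if dd: "d \<in> hdist n x ` CC" for d
  proof -
    obtain c where c: "c \<in> CC" "d = hdist n x c" using dd by blast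
    have cv: "c \<in> vecs n" "synd c = 0" using c(1) unfolding C_eq by auto
    have "synd (x - c) = synd x" using cv(2) by (simp add: synd_diff)
    moreover have "rk (synd (x - c)) mb \<le> wt (x - c)" by (rule rk_synd_le) (use x cv in blast)
    ultimately show ?thesis using c(2) hdist_wt by simp
  qed
  obtain y where y: "y \<in> vecs n" "synd y = synd x" "wt y \<le> rk (synd x) mb"
    using synd_realize[OF synd_matM] by blast
  have wy: "wt y = rk (synd x) mb" using y rk_synd_le[OF y(1)] by simp
  have "x - y \<in> CC" unfolding C_eq using x y(1) y(2) by (simp add: synd_diff vecs_diff)
  moreover have "hdist n x (x - y) = wt y" unfolding hdist_wt by simp
  ultimately show "rk (synd x) mb \<in> hdist n x ` CC" using wy by (metis image_eqI)
qed

lemma layer_eq: "layer n CC (int l) = {x\<in>vecs n. rk (synd x) mb = l}"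
  unfolding layer_def using dist_eq by auto

lemma layer_neg: "layer n CC (-1) = {}"
  unfolding layer_def by auto

lemma cov_radius: "covering_radius n CC = min ma mb"
proof -
  have "dist_code n CC ` vecs n = (\<lambda>x. rk (synd x) mb) ` vecs n"
    using dist_eq by (intro image_cong) auto
  also have "\<dots> = (\<lambda>S. rk S mb) ` (synd ` vecs n)" by (simp add: image_image)
  also have "\<dots> = (\<lambda>S. rk S mb) ` (matM ma mb :: (nat \<Rightarrow> nat \<Rightarrow> 'a) set)" unfolding synd_surj ..
  finally have e: "dist_code n CC ` vecs n = (\<lambda>S. rk S mb) ` (matM ma mb :: (nat \<Rightarrow> nat \<Rightarrow> 'a) set)" .
  have "Max ((\<lambda>S. rk S mb) ` (matM ma mb :: (nat \<Rightarrow> nat \<Rightarrow> 'a) set)) = min ma mb"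
  proof (rule Max_eqI)
    show "finite ((\<lambda>S. rk S mb) ` (matM ma mb :: (nat \<Rightarrow> nat \<Rightarrow> 'a) set))"
      using card_matM(2)[OF mb_pos, where 'a='a and m=ma] by (rule finite_imageI)
    show "y \<le> min ma mb" if "y \<in> (\<lambda>S. rk S mb) ` (matM ma mb :: (nat \<Rightarrow> nat \<Rightarrow> 'a) set)" for y
      using that rk_le_m rk_le_k by fastforce
    show "min ma mb \<in> (\<lambda>S. rk S mb) ` (matM ma mb :: (nat \<Rightarrow> nat \<Rightarrow> 'a) set)"
      using rk_Eid[where 'a='a and m=ma and k=mb] Eid_matM by (metis image_eqI)
  qed
  then show ?thesis unfolding covering_radius_def e .
qed

lemma C_subsp: "subsp CC"
  unfolding subsp_def C_eq
proof (intro conjI ballI allI)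
  show "0 \<in> {x \<in> vecs n. synd x = 0}" by simp
  show "x + y \<in> {x \<in> vecs n. synd x = 0}" if "x \<in> {x \<in> vecs n. synd x = 0}" "y \<in> {x \<in> vecs n. synd x = 0}" for x y
    using that by (simp add: synd_add vecs_add)
  show "sc c x \<in> {x \<in> vecs n. synd x = 0}" if "x \<in> {x \<in> vecs n. synd x = 0}" for c x
  proof -
    have "synd (sc c x) = (\<lambda>i j. c * synd x i j)"
      unfolding synd_def by (simp add: fun_eq_iff sum_distrib_left algebra_simps)
    then show ?thesis using that by (simp add: vecs_sc fun_eq_iff)
  qed
qed

lemma card_C: "card CC = card (UNIV::'a set) ^ (n - ma * mb)"
proof -
  have "card (vecs n :: (nat \<Rightarrow> 'a) set) = card (synd ` vecs n) * card {x\<in>vecs n. synd x = 0}"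
    by (rule card_hom[OF subsp_vecs card_vecs(2)]) (simp add: synd_add)
  then have e: "card (UNIV::'a set) ^ n = card (UNIV::'a set) ^ (ma * mb) * card CC"
    unfolding synd_surj card_matM(1)[OF mb_pos] card_vecs(1) C_eq[symmetric] .
  obtain d where d: "card CC = card (UNIV::'a set) ^ d" using subsp_power[OF C_subsp CC_vecs] by blast
  have "card (UNIV::'a set) ^ n = card (UNIV::'a set) ^ (ma * mb + d)" using e d by (simp add: power_add)
  then have "n = ma * mb + d" using pow_inj[where 'a='a] by blast
  then show ?thesis using d by simp
qed

end



context code2 begin

lemma wt1:
  assumes z: "z \<in> vecs n"
  shows "wt z = 1 \<longleftrightarrow> (\<exists>s<n. \<exists>c. c \<noteq> 0 \<and> z = pt s c)"
proof
  assume w: "wt z = 1"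
  then obtain s where s: "{i. i < n \<and> z i \<noteq> 0} = {s}" unfolding wt_def by (rule card_1_singletonE)
  then have s1: "s < n" "z s \<noteq> 0" by auto
  have "z = pt s (z s)"
  proof
    fix i show "z i = pt s (z s) i"
    proof (cases "i = s")
      case True then show ?thesis by (simp add: pt_def)
    next
      case False
      show ?thesis
      proof (cases "i < n")
        case True then have "z i = 0" using s False by blast
        then show ?thesis using False by (simp add: pt_def)
      next
        case f2: False then show ?thesis using z False unfolding vecs_def pt_def by simp
      qed
    qed
  qed
  then show "\<exists>s<n. \<exists>c. c \<noteq> 0 \<and> z = pt s c" using s1 by blast
next
  assume "\<exists>s<n. \<exists>c. c \<noteq> 0 \<and> z = pt s c"
  then obtain s c where sc: "s < n" "c \<noteq> 0" "z = pt s c" by blast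
  then have "{i. i < n \<and> z i \<noteq> 0} = {s}" unfolding pt_def by auto
  then show "wt z = 1" unfolding wt_def by simp
qed

lemma nb_bij:
  assumes x: "x \<in> vecs n"
  shows "bij_betw (\<lambda>y. synd (y - x)) (neighbours n x) (R1 ma mb)"
proof -
  have nb: "y \<in> neighbours n x \<longleftrightarrow> y \<in> vecs n \<and> (\<exists>s<n. \<exists>c. c \<noteq> 0 \<and> y - x = pt s c)" for y
  proof -
    have "y \<in> neighbours n x \<longleftrightarrow> y \<in> vecs n \<and> wt (y - x) = 1"
      unfolding neighbours_def hdist_wt using wt_sym[of x y] by simp
    also have "\<dots> \<longleftrightarrow> y \<in> vecs n \<and> (\<exists>s<n. \<exists>c. c \<noteq> 0 \<and> y - x = pt s c)"
      using wt1[of "y - x"] x by (auto simp: vecs_diff)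
    finally show ?thesis .
  qed
  show ?thesis
  proof (rule bij_betw_imageI)
    show "inj_on (\<lambda>y. synd (y - x)) (neighbours n x)"
    proof
      fix y1 y2 assume y1: "y1 \<in> neighbours n x" and y2: "y2 \<in> neighbours n x"
        and e: "synd (y1 - x) = synd (y2 - x)"
      obtain s1 c1 where a: "s1 < n" "c1 \<noteq> 0" "y1 - x = pt s1 c1" using y1 nb by blast
      obtain s2 c2 where b: "s2 < n" "c2 \<noteq> 0" "y2 - x = pt s2 c2" using y2 nb by blast
      have "s1 = s2 \<and> c1 = c2" using synd_pt_inj[OF a(1) b(1) a(2) b(2)] e a(3) b(3) by simp
      then have "y1 - x = y2 - x" using a(3) b(3) by simp
      then show "y1 = y2" by simp
    qed
    show "(\<lambda>y. synd (y - x)) ` neighbours n x = R1 ma mb"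
    proof
      show "(\<lambda>y. synd (y - x)) ` neighbours n x \<subseteq> R1 ma mb"
      proof
        fix R assume "R \<in> (\<lambda>y. synd (y - x)) ` neighbours n x"
        then obtain y where y: "y \<in> neighbours n x" "R = synd (y - x)" by blast
        obtain s c where a: "s < n" "c \<noteq> 0" "y - x = pt s c" using y(1) nb by blast
        show "R \<in> R1 ma mb" using synd_pt_R1[OF a(1) a(2)] y(2) a(3) by simp
      qed
      show "R1 ma mb \<subseteq> (\<lambda>y. synd (y - x)) ` neighbours n x"
      proof
        fix R :: "nat \<Rightarrow> nat \<Rightarrow> 'a" assume "R \<in> R1 ma mb"
        then obtain s c where a: "s < n" "c \<noteq> 0" "R = synd (pt s c)" using R1_synd by blast
        have yv: "x + pt s c \<in> vecs n" using x pt_vecs[OF a(1)] by blast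
        have "x + pt s c - x = pt s c" by simp
        then have "x + pt s c \<in> neighbours n x" using nb yv a by blast
        moreover have "R = synd (x + pt s c - x)" using a(3) by simp
        ultimately show "R \<in> (\<lambda>y. synd (y - x)) ` neighbours n x" by blast
      qed
    qed
  qed
qed

lemma card_nb_P:
  assumes x: "x \<in> vecs n"
  shows "card {y\<in>neighbours n x. P (synd (y - x))} = card {R\<in>R1 ma mb. P R}"
proof -
  have b: "bij_betw (\<lambda>y. synd (y - x)) (neighbours n x) (R1 ma mb)" by (rule nb_bij[OF x])
  have i: "inj_on (\<lambda>y. synd (y - x)) {y\<in>neighbours n x. P (synd (y - x))}"
    using bij_betw_imp_inj_on[OF b] by (rule inj_on_subset) blast
  have sj: "(\<lambda>y. synd (y - x)) ` neighbours n x = R1 ma mb" by (rule bij_betw_imp_surj_on[OF b])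
  have im: "(\<lambda>y. synd (y - x)) ` {y\<in>neighbours n x. P (synd (y - x))} = {R\<in>R1 ma mb. P R}"
  proof
    show "(\<lambda>y. synd (y - x)) ` {y\<in>neighbours n x. P (synd (y - x))} \<subseteq> {R\<in>R1 ma mb. P R}"
      using sj by blast
    show "{R\<in>R1 ma mb. P R} \<subseteq> (\<lambda>y. synd (y - x)) ` {y\<in>neighbours n x. P (synd (y - x))}"
    proof
      fix R assume R: "R \<in> {R\<in>R1 ma mb. P R}"
      then obtain y where y: "y \<in> neighbours n x" "R = synd (y - x)" using sj by (metis (no_types, lifting) imageE mem_Collect_eq)
      then show "R \<in> (\<lambda>y. synd (y - x)) ` {y\<in>neighbours n x. P (synd (y - x))}" using R by blast
    qed
  qed
  show ?thesis using card_image[OF i] im by simp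
qed

lemma nb_vecs: "neighbours n x \<subseteq> vecs n" unfolding neighbours_def by blast

lemma card_nb_layer:
  assumes x: "x \<in> vecs n"
  shows "card (neighbours n x \<inter> layer n CC (int t)) = card {R\<in>R1 ma mb. rk (synd x + R) mb = t}"
proof -
  have "neighbours n x \<inter> layer n CC (int t) = {y\<in>neighbours n x. rk (synd x + synd (y - x)) mb = t}"
  proof (rule set_eqI)
    fix y
    have e: "synd x + synd (y - x) = synd y" by (simp add: synd_diff)
    show "y \<in> neighbours n x \<inter> layer n CC (int t) \<longleftrightarrow> y \<in> {y\<in>neighbours n x. rk (synd x + synd (y - x)) mb = t}"
      unfolding layer_eq Int_iff mem_Collect_eq e using nb_vecs[of x] by blast
  qed
  then show ?thesis using card_nb_P[OF x, of "\<lambda>R. rk (synd x + R) mb = t"] by simp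
qed

lemma card_R1: "card (R1 ma mb :: (nat \<Rightarrow> nat \<Rightarrow> 'a) set) = (card (UNIV::'a set) - 1) * n"
proof -
  define f where "f = (\<lambda>(s, c). synd (pt s (c::'a)))"
  have "bij_betw f ({..<n} \<times> (UNIV - {0})) (R1 ma mb)"
  proof (rule bij_betw_imageI)
    show "inj_on f ({..<n} \<times> (UNIV - {0}))"
    proof
      fix p1 p2 assume p1: "p1 \<in> {..<n} \<times> (UNIV - {0::'a})" and p2: "p2 \<in> {..<n} \<times> (UNIV - {0::'a})"
        and e: "f p1 = f p2"
      obtain s1 c1 where a: "p1 = (s1, c1)" by (cases p1)
      obtain s2 c2 where b: "p2 = (s2, c2)" by (cases p2)
      have h: "s1 < n" "s2 < n" "c1 \<noteq> 0" "c2 \<noteq> 0" using p1 p2 a b by auto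
      have "synd (pt s1 c1) = synd (pt s2 c2)" using e a b unfolding f_def by simp
      then have "s1 = s2 \<and> c1 = c2" by (rule synd_pt_inj[OF h])
      then show "p1 = p2" using a b by simp
    qed
    show "f ` ({..<n} \<times> (UNIV - {0})) = R1 ma mb"
    proof
      show "f ` ({..<n} \<times> (UNIV - {0})) \<subseteq> R1 ma mb" unfolding f_def using synd_pt_R1 by auto
      show "R1 ma mb \<subseteq> f ` ({..<n} \<times> (UNIV - {0}))"
      proof
        fix R :: "nat \<Rightarrow> nat \<Rightarrow> 'a" assume "R \<in> R1 ma mb"
        then obtain s c where a: "s < n" "c \<noteq> 0" "R = synd (pt s c)" using R1_synd by blast
        then have "(s, c) \<in> {..<n} \<times> (UNIV - {0})" by simp
        moreover have "R = f (s, c)" unfolding f_def using a by simp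
        ultimately show "R \<in> f ` ({..<n} \<times> (UNIV - {0}))" by blast
      qed
    qed
  qed
  then have "card ({..<n} \<times> (UNIV - {0::'a})) = card (R1 ma mb :: (nat \<Rightarrow> nat \<Rightarrow> 'a) set)"
    by (rule bij_betw_same_card)
  then have "card (R1 ma mb :: (nat \<Rightarrow> nat \<Rightarrow> 'a) set) = card ({..<n} \<times> (UNIV - {0::'a}))" by simp
  also have "\<dots> = n * (card (UNIV::'a set) - 1)" by (simp add: card_cartesian_product card_Diff_singleton)
  finally show ?thesis by simp
qed

lemma finR1: "finite (R1 ma mb :: (nat \<Rightarrow> nat \<Rightarrow> 'a) set)"
  unfolding R1_def using card_vecs(2)[where 'a='a] by simp

end



lemma qdvd: "1 \<le> (q::nat) \<Longrightarrow> (q - 1) dvd (q ^ l - 1)"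
proof (induction l)
  case 0 then show ?case by simp
next
  case (Suc l)
  have p: "1 \<le> q ^ l" using Suc.prems by simp
  have eq: "q ^ Suc l - 1 = (q - 1) * q ^ l + (q ^ l - 1)"
  proof -
    have "q ^ Suc l = q * q ^ l" by simp
    moreover have "(q - 1) * q ^ l = q * q ^ l - q ^ l" by (simp add: diff_mult_distrib)
    moreover have "q ^ l \<le> q * q ^ l" using Suc.prems by simp
    ultimately show ?thesis using p by simp
  qed
  have dv: "(q - 1) dvd (q - 1) * q ^ l + (q ^ l - 1)"
    by (rule dvd_add, rule dvd_triv_left, rule Suc.IH[OF Suc.prems])
  show ?case by (subst eq) (rule dv)
qed

lemma geo_eq: "1 \<le> (q::nat) \<Longrightarrow> q ^ l - 1 = (q - 1) * ((q ^ l - 1) div (q - 1))"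
  using qdvd[of q l] by simp

lemma geo_diff:
  assumes q: "1 \<le> (q::nat)" and lm: "l \<le> m"
  shows "q ^ m - q ^ l = (q - 1) * ((q ^ m - 1) div (q - 1) - (q ^ l - 1) div (q - 1))"
proof -
  have "q ^ l \<le> q ^ m" using q lm by (simp add: power_increasing)
  moreover have "1 \<le> q ^ l" using q by simp
  ultimately have "q ^ m - q ^ l = (q ^ m - 1) - (q ^ l - 1)" by simp
  also have "\<dots> = (q - 1) * ((q ^ m - 1) div (q - 1)) - (q - 1) * ((q ^ l - 1) div (q - 1))"
    using geo_eq[OF q, of m] geo_eq[OF q, of l] by simp
  also have "\<dots> = (q - 1) * ((q ^ m - 1) div (q - 1) - (q ^ l - 1) div (q - 1))"
    by (simp add: diff_mult_distrib2)
  finally show ?thesis .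
qed

lemma R1_nz: "R \<in> R1 m k \<Longrightarrow> R \<noteq> (0 :: nat \<Rightarrow> nat \<Rightarrow> 'a::field)"
proof
  assume R: "R \<in> R1 m k" and z: "R = 0"
  obtain p where p: "p \<in> (vecs m - {0}) \<times> (vecs k - {0})" "R = (\<lambda>(u,v). outer u v) p"
    using R unfolding R1_def by blast
  obtain u v where uv: "p = (u, v)" by (cases p)
  have u: "u \<in> vecs m" "u \<noteq> 0" and v: "v \<in> vecs k" "v \<noteq> 0" using p uv by auto
  obtain i where i: "u i \<noteq> 0" using vecs_nz[OF u] by blast
  obtain j where j: "v j \<noteq> 0" using vecs_nz[OF v] by blast
  have "R i j = u i * v j" using p(2) uv by (simp add: outer_def)
  then have "R i j \<noteq> 0" using i j by simp
  then show False using z by simp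
qed

context code2 begin

lemma wt0: "z \<in> vecs n \<Longrightarrow> wt z = 0 \<Longrightarrow> z = 0"
proof -
  assume z: "z \<in> vecs n" "wt z = 0"
  have e: "{i. i < n \<and> z i \<noteq> 0} = {}" using z(2) unfolding wt_def by simp
  have "\<forall>i. z i = 0"
  proof
    fix i show "z i = 0"
    proof (cases "i < n")
      case True then show ?thesis using e by blast
    next
      case False then show ?thesis using z(1) unfolding vecs_def by simp
    qed
  qed
  then show "z = 0" by (intro ext) simp
qed

lemma synd_uminus: "synd (- x) = - synd x"
  using synd_diff[of 0 x] by simp

lemma pt_uminus: "pt s (- (c::'a)) = - pt s c"
  by (simp add: pt_def fun_eq_iff)

lemma wt_ge3:
  assumes z: "z \<in> CC" "z \<noteq> 0" shows "3 \<le> wt z"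
proof (rule ccontr)
  assume "\<not> 3 \<le> wt z"
  then have w: "wt z = 0 \<or> wt z = 1 \<or> wt z = 2" by auto
  have zv: "z \<in> vecs n" and sz: "synd z = 0" using z(1) unfolding C_eq by auto
  show False
  proof (cases "wt z = 0")
    case True then show False using wt0[OF zv] z(2) by simp
  next
    case f0: False
    show False
    proof (cases "wt z = 1")
      case True
      then obtain s c where sc: "s < n" "c \<noteq> 0" "z = pt s c" using wt1[OF zv] by blast
      have "synd z \<in> R1 ma mb" using synd_pt_R1[OF sc(1) sc(2)] sc(3) by simp
      then show False using R1_nz sz by blast
    next
      case f1: False
      then have "wt z = 2" using w f0 by simp
      then obtain s1 s2 where s12: "{i. i < n \<and> z i \<noteq> 0} = {s1, s2}" "s1 \<noteq> s2"
        unfolding wt_def by (meson card_2_iff)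
      have s1: "s1 < n" "z s1 \<noteq> 0" and s2: "s2 < n" "z s2 \<noteq> 0" using s12(1) by blast+
      have "z = pt s1 (z s1) + pt s2 (z s2)"
      proof
        fix i show "z i = (pt s1 (z s1) + pt s2 (z s2)) i"
        proof (cases "i = s1 \<or> i = s2")
          case True then show ?thesis using s12(2) by (auto simp: pt_def)
        next
          case False
          have "z i = 0"
          proof (cases "i < n")
            case True then show ?thesis using False s12(1) by blast
          next
            case f: False then show ?thesis using zv unfolding vecs_def by simp
          qed
          then show ?thesis using False by (simp add: pt_def)
        qed
      qed
      then have "synd (pt s1 (z s1)) + synd (pt s2 (z s2)) = 0" using sz synd_add by metis
      then have "synd (pt s2 (z s2)) = - synd (pt s1 (z s1))" by (simp add: eq_neg_iff_add_eq_0 add.commute)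
      also have "\<dots> = synd (pt s1 (- z s1))" by (simp add: pt_uminus synd_uminus)
      finally have eqq: "synd (pt s2 (z s2)) = synd (pt s1 (- z s1))" .
      have nz: "- z s1 \<noteq> 0" using s1(2) by simp
      have "s2 = s1 \<and> z s2 = - z s1" by (rule synd_pt_inj[OF s2(1) s1(1) s2(2) nz eqq])
      then show False using s12(2) by simp
    qed
  qed
qed

lemma C_diff: "x \<in> CC \<Longrightarrow> y \<in> CC \<Longrightarrow> x - y \<in> CC"
  unfolding C_eq by (simp add: synd_diff vecs_diff)

end



context code2 begin

lemma exists_wt3:
  assumes ma2: "2 \<le> ma"
  shows "\<exists>y\<in>CC. wt y = 3"
proof -
  define e0 where "e0 = (pt 0 1 :: nat \<Rightarrow> 'a)"
  define e1 where "e1 = (pt 1 1 :: nat \<Rightarrow> 'a)"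
  have e0v: "e0 \<in> vecs ma" "e0 \<noteq> 0" unfolding e0_def using ma2 pt_vecs[of 0 ma 1] by (auto simp: pt_def fun_eq_iff)
  have e1v: "e1 \<in> vecs ma" "e1 \<noteq> 0" unfolding e1_def using ma2 pt_vecs[of 1 ma 1] by (auto simp: pt_def fun_eq_iff)
  have e01v: "e0 + e1 \<in> vecs ma" "e0 + e1 \<noteq> 0" using e0v e1v
    by (auto simp: e0_def e1_def pt_def fun_eq_iff)
  obtain j1 c1 where j1: "j1 < na" "c1 \<noteq> 0" "col A ma j1 = sc c1 e0" using ham_rep[OF hA e0v] by blast
  obtain j2 c2 where j2: "j2 < na" "c2 \<noteq> 0" "col A ma j2 = sc c2 e1" using ham_rep[OF hA e1v] by blast
  obtain j3 c3 where j3: "j3 < na" "c3 \<noteq> 0" "col A ma j3 = sc c3 (e0 + e1)" using ham_rep[OF hA e01v] by blast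
  have v0: "e0 0 = 1" "e0 1 = 0" "e1 0 = 0" "e1 1 = 1" unfolding e0_def e1_def pt_def by simp_all
  have d12: "j1 \<noteq> j2"
  proof
    assume "j1 = j2"
    then have "sc c1 e0 0 = sc c2 e1 0" using j1(3) j2(3) by simp
    then show False using v0 j1(2) by simp
  qed
  have d13: "j1 \<noteq> j3"
  proof
    assume "j1 = j3"
    then have "sc c1 e0 1 = sc c3 (e0 + e1) 1" using j1(3) j3(3) by simp
    then show False using v0 j3(2) by simp
  qed
  have d23: "j2 \<noteq> j3"
  proof
    assume "j2 = j3"
    then have "sc c2 e1 0 = sc c3 (e0 + e1) 0" using j2(3) j3(3) by simp
    then show False using v0 j3(2) by simp
  qed
  define s1 where "s1 = j1 * nb"
  define s2 where "s2 = j2 * nb"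
  define s3 where "s3 = j3 * nb"
  have sn: "s1 < n" "s2 < n" "s3 < n" unfolding s1_def s2_def s3_def using j1(1) j2(1) j3(1) nb_pos by simp_all
  have sd: "s1 div nb = j1" "s2 div nb = j2" "s3 div nb = j3" "s1 mod nb = 0" "s2 mod nb = 0" "s3 mod nb = 0"
    unfolding s1_def s2_def s3_def using nb_pos by simp_all
  have sdist: "s1 \<noteq> s2" "s1 \<noteq> s3" "s2 \<noteq> s3" unfolding s1_def s2_def s3_def using d12 d13 d23 nb_pos by simp_all
  define y where "y = pt s1 (1 / c1) + pt s2 (1 / c2) + pt s3 (- 1 / c3)"
  define b where "b = col B mb 0"
  have "synd y = outer (sc (1/c1) (sc c1 e0)) b + outer (sc (1/c2) (sc c2 e1)) b + outer (sc (-1/c3) (sc c3 (e0 + e1))) b"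
    unfolding y_def synd_add synd_pt[OF sn(1)] synd_pt[OF sn(2)] synd_pt[OF sn(3)] sd j1(3) j2(3) j3(3) b_def ..
  also have "\<dots> = 0" unfolding outer_def using j1(2) j2(2) j3(2) by (simp add: fun_eq_iff field_simps)
  finally have sy: "synd y = 0" .
  have yv: "y \<in> vecs n" unfolding y_def using sn by (intro vecs_add pt_vecs)
  have "y \<in> CC" unfolding C_eq using yv sy by simp
  moreover have "{i. i < n \<and> y i \<noteq> 0} = {s1, s2, s3}"
    unfolding y_def pt_def using sn sdist j1(2) j2(2) j3(2) by auto
  then have "wt y = 3" unfolding wt_def using sdist by simp
  ultimately show ?thesis by blast
qed

lemma min_dist_3:
  assumes ma2: "2 \<le> ma"
  shows "min_dist n CC = 3"
  unfolding min_dist_def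
proof (rule Min_eqI)
  show "finite {hdist n x y |x y. x \<in> CC \<and> y \<in> CC \<and> x \<noteq> y}"
  proof (rule finite_subset)
    show "{hdist n x y |x y. x \<in> CC \<and> y \<in> CC \<and> x \<noteq> y} \<subseteq> (\<lambda>(x, y). hdist n x y) ` (CC \<times> CC)" by auto
    show "finite ((\<lambda>(x, y). hdist n x y) ` (CC \<times> CC))" using finC by simp
  qed
  show "3 \<le> d" if dd: "d \<in> {hdist n x y |x y. x \<in> CC \<and> y \<in> CC \<and> x \<noteq> y}" for d
  proof -
    obtain x y where xy: "d = hdist n x y" "x \<in> CC" "y \<in> CC" "x \<noteq> y" using dd by blast
    have "x - y \<in> CC" "x - y \<noteq> 0" using C_diff xy by auto
    then show ?thesis using wt_ge3 xy(1) hdist_wt by simp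
  qed
  obtain y where y: "y \<in> CC" "wt y = 3" using exists_wt3[OF ma2] by blast
  have "y \<noteq> 0" using y(2) wt_zero by auto
  moreover have "hdist n y 0 = 3" using y(2) hdist_wt by simp
  ultimately show "3 \<in> {hdist n x y |x y. x \<in> CC \<and> y \<in> CC \<and> x \<noteq> y}" using y(1) zero_C by force
qed

lemma layer_counts:
  assumes x: "x \<in> vecs n"
  defines "l \<equiv> rk (synd x) mb"
  shows "card (neighbours n x \<inter> layer n CC (int l + 1)) * (card (UNIV::'a set) - 1)
           = (card (UNIV::'a set) ^ ma - card (UNIV::'a set) ^ l) * (card (UNIV::'a set) ^ mb - card (UNIV::'a set) ^ l)"
    and "card (neighbours n x \<inter> layer n CC (int l - 1)) * (card (UNIV::'a set) - 1)
           = (card (UNIV::'a set) ^ l - 1) * card (UNIV::'a set) ^ (l - 1)"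
    and "card (neighbours n x \<inter> layer n CC (int l)) + card (neighbours n x \<inter> layer n CC (int l - 1))
           + card (neighbours n x \<inter> layer n CC (int l + 1)) = (card (UNIV::'a set) - 1) * n"
proof -
  interpret M: mat "synd x" ma mb by (rule mat.intro[OF synd_matM])
  have p: "card (neighbours n x \<inter> layer n CC (int l + 1)) = card {R\<in>R1 ma mb. rk (synd x + R) mb = l + 1}"
  proof -
    have eq: "int (l + 1) = int l + 1" by simp
    show ?thesis using card_nb_layer[OF x, of "l + 1"] unfolding eq .
  qed
  have m: "card (neighbours n x \<inter> layer n CC (int l - 1)) = card {R\<in>R1 ma mb. rk (synd x + R) mb + 1 = l}"
  proof (cases "l = 0")
    case True
    have e: "int l - 1 = -1" using True by simp
    have E: "{R\<in>R1 ma mb. rk (synd x + R) mb + 1 = l} = {}" using True by simp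
    show ?thesis unfolding e layer_neg E by simp
  next
    case False
    then have e: "int (l - 1) = int l - 1" by simp
    have "{R\<in>R1 ma mb. rk (synd x + R) mb = l - 1} = {R\<in>R1 ma mb. rk (synd x + R) mb + 1 = l}"
      using False by auto
    then show ?thesis using card_nb_layer[OF x, of "l - 1"] unfolding e by simp
  qed
  have z: "card (neighbours n x \<inter> layer n CC (int l)) = card {R\<in>R1 ma mb. rk (synd x + R) mb = l}"
    using card_nb_layer[OF x, of l] by simp
  show "card (neighbours n x \<inter> layer n CC (int l + 1)) * (card (UNIV::'a set) - 1)
           = (card (UNIV::'a set) ^ ma - card (UNIV::'a set) ^ l) * (card (UNIV::'a set) ^ mb - card (UNIV::'a set) ^ l)"
    using p M.count_plus unfolding l_def by simp
  show "card (neighbours n x \<inter> layer n CC (int l - 1)) * (card (UNIV::'a set) - 1)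
           = (card (UNIV::'a set) ^ l - 1) * card (UNIV::'a set) ^ (l - 1)"
    using m M.count_minus unfolding l_def by simp
  define A0 where "A0 = {R\<in>R1 ma mb. rk (synd x + R) mb = l}"
  define Am where "Am = {R\<in>R1 ma mb. rk (synd x + R) mb + 1 = l}"
  define Ap where "Ap = {R\<in>R1 ma mb. rk (synd x + R) mb = l + 1}"
  have U: "R1 ma mb = A0 \<union> Am \<union> Ap"
    unfolding A0_def Am_def Ap_def using M.R1_class unfolding l_def by blast
  have f: "finite A0" "finite Am" "finite Ap" unfolding A0_def Am_def Ap_def using finR1 by simp_all
  have d1: "A0 \<inter> Am = {}" unfolding A0_def Am_def by auto
  have d2: "(A0 \<union> Am) \<inter> Ap = {}" unfolding A0_def Am_def Ap_def by auto
  have "card (A0 \<union> Am \<union> Ap) = card (A0 \<union> Am) + card Ap"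
    by (rule card_Un_disjoint) (use f d2 in auto)
  also have "card (A0 \<union> Am) = card A0 + card Am"
    by (rule card_Un_disjoint) (use f d1 in auto)
  finally have "card (R1 ma mb :: (nat \<Rightarrow> nat \<Rightarrow> 'a) set) = card A0 + card Am + card Ap"
    unfolding U .
  then show "card (neighbours n x \<inter> layer n CC (int l)) + card (neighbours n x \<inter> layer n CC (int l - 1))
           + card (neighbours n x \<inter> layer n CC (int l + 1)) = (card (UNIV::'a set) - 1) * n"
    using z m p card_R1 unfolding A0_def Am_def Ap_def by simp
qed

end



lemma m_ge2:
  assumes q: "2 \<le> (q::nat)" and na: "na = (q ^ m - 1) div (q - 1)" and n3: "3 \<le> na"
  shows "2 \<le> m"
proof (rule ccontr)
  assume "\<not> 2 \<le> m"
  then have "m = 0 \<or> m = 1" by auto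
  then show False
  proof
    assume "m = 0" then show False using na n3 by simp
  next
    assume "m = 1" then have "na = 1" using na q by simp
    then show False using n3 by simp
  qed
qed

lemma cancel_q1:
  assumes q: "2 \<le> (q::nat)" and e: "x * (q - 1) = (q - 1) * y"
  shows "x = y"
  using e q by (simp add: mult.commute)

theorem theorem4p1:
  fixes A B :: "nat \<Rightarrow> nat \<Rightarrow> 'a::{finite,field}"
    and ma mb na nb :: nat
  defines "q \<equiv> card (UNIV :: 'a set)"
  assumes hA: "hamming_pcm A ma na" and hB: "hamming_pcm B mb nb"
    and na_def: "na = (q ^ ma - 1) div (q - 1)" and nb_def: "nb = (q ^ mb - 1) div (q - 1)"
    and na3: "na \<ge> 3" and nb3: "nb \<ge> 3"
  shows "let n = na * nb; C = kernel_code (kron A B mb nb) (ma * mb) n;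
             \<rho> = covering_radius n C;
             b = (\<lambda>l. (q - 1) * (na - (q ^ l - 1) div (q - 1)) * (nb - (q ^ l - 1) div (q - 1)));
             c = (\<lambda>l. ((q ^ l - 1) div (q - 1)) * q ^ (l - 1))
         in card C = q ^ (n - ma * mb) \<and>
            min_dist n C = 3 \<and>
            \<rho> = min ma mb \<and>
            completely_regular n C b c \<and>
            (\<forall>l\<le>\<rho>. \<forall>x \<in> layer n C (int l).
               card (neighbours n x \<inter> layer n C (int l)) = (q - 1) * n - c l - b l)"
proof -
  have q2: "2 \<le> q" unfolding q_def by (rule q_ge2)
  have q1: "1 \<le> q" using q2 by simp
  have ma2: "2 \<le> ma" by (rule m_ge2[OF q2 na_def na3])
  have mb2: "2 \<le> mb" by (rule m_ge2[OF q2 nb_def nb3])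
  interpret code2 A B ma mb na nb
    by (intro code2.intro code_setup.intro code2_axioms.intro hA hB) (use nb3 mb2 in simp_all)
  define G where "G = (\<lambda>l::nat. (q ^ l - 1) div (q - 1))"
  define b where "b = (\<lambda>l. (q - 1) * (na - (q ^ l - 1) div (q - 1)) * (nb - (q ^ l - 1) div (q - 1)))"
  define c where "c = (\<lambda>l. ((q ^ l - 1) div (q - 1)) * q ^ (l - 1))"
  have CC: "kernel_code (kron A B mb nb) (ma * mb) n = CC" unfolding CC_def ..
  have lay: "x \<in> vecs n \<and> rk (synd x) mb = l" if "x \<in> layer n CC (int l)" for x l
    using that unfolding layer_eq by blast
  have bl: "card (neighbours n x \<inter> layer n CC (int l + 1)) = b l"
    and cl: "card (neighbours n x \<inter> layer n CC (int l - 1)) = c l"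
    and al: "card (neighbours n x \<inter> layer n CC (int l)) = (q - 1) * n - c l - b l"
    if x: "x \<in> layer n CC (int l)" for x l
  proof -
    have xv: "x \<in> vecs n" and r: "rk (synd x) mb = l" using lay[OF x] by auto
    have lma: "l \<le> ma" using rk_le_m[OF synd_matM] r by metis
    have lmb: "l \<le> mb" using rk_le_k[OF synd_matM] r by metis
    have e1: "card (neighbours n x \<inter> layer n CC (int l + 1)) * (q - 1) = (q ^ ma - q ^ l) * (q ^ mb - q ^ l)"
      using layer_counts(1)[OF xv] r unfolding q_def by simp
    have "(q ^ ma - q ^ l) * (q ^ mb - q ^ l) = (q - 1) * (na - G l) * ((q - 1) * (nb - G l))"
      using geo_diff[OF q1 lma] geo_diff[OF q1 lmb] unfolding na_def nb_def G_def by simp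
    then have "card (neighbours n x \<inter> layer n CC (int l + 1)) * (q - 1) = (q - 1) * ((q - 1) * (na - G l) * (nb - G l))"
      using e1 by (simp add: ac_simps)
    then show "card (neighbours n x \<inter> layer n CC (int l + 1)) = b l"
      using cancel_q1[OF q2] unfolding b_def G_def by blast
    have e2: "card (neighbours n x \<inter> layer n CC (int l - 1)) * (q - 1) = (q ^ l - 1) * q ^ (l - 1)"
      using layer_counts(2)[OF xv] r unfolding q_def by simp
    then have "card (neighbours n x \<inter> layer n CC (int l - 1)) * (q - 1) = (q - 1) * (G l * q ^ (l - 1))"
      using geo_eq[OF q1, of l] unfolding G_def by (simp add: ac_simps)
    then show cc: "card (neighbours n x \<inter> layer n CC (int l - 1)) = c l"
      using cancel_q1[OF q2] unfolding c_def G_def by blast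
    have e3: "card (neighbours n x \<inter> layer n CC (int l)) + card (neighbours n x \<inter> layer n CC (int l - 1))
           + card (neighbours n x \<inter> layer n CC (int l + 1)) = (q - 1) * n"
      using layer_counts(3)[OF xv] r unfolding q_def by simp
    show "card (neighbours n x \<inter> layer n CC (int l)) = (q - 1) * n - c l - b l"
      using e3 cc \<open>card (neighbours n x \<inter> layer n CC (int l + 1)) = b l\<close> by simp
  qed
  have cr: "completely_regular n CC b c"
    unfolding completely_regular_def using bl cl by blast
  show ?thesis
    unfolding Let_def CC b_def[symmetric] c_def[symmetric]
    using card_C min_dist_3[OF ma2] cov_radius cr al unfolding q_def by blast
qed


end
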